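(* Let $(U,d)$ be an asymmetric pseudometric space with $|U|=n$, $k$ an integer with $2\le k\le n$, and $R^*>0$ the optimal AMMD value. Then the algorithm $\mathrm{BAC}(U,d,k)$ (described in the context) is a $\frac{1}{6k}$-approximation for AMMD: it returns a set $S\subseteq U$ with $|S|=k$ and $\operatorname{div}(S)\ge \frac{R^*}{6k}$.
   Context: An asymmetric pseudometric space $(U,d)$ is a finite set $U$ with $d:U\times U\to\mathbb{R}_{\ge 0}$ such that $d(u,u)=0$ and $d(u,v)\le d(u,w)+d(w,v)$ for all $u,v,w\in U$ ($d$ need not be symmetric). For $S\subseteq U$, $\operatorname{div}(S)=\min_{u,v\in S,\,u\ne v} d(u,v)$; AMMD asks for $O\subseteq U$, $|O|=k$, maximizing $\operatorname{div}(O)$, with maximum value $R^*$. $d_{\min}(u,v)=\min\{d(u,v),d(v,u)\}$, $d_{\max}(u,v)=\max\{d(u,v),d(v,u)\}$. Cluster$(U,d,R)$ (for $R>0$): initially all points are unmarked; while an unmarked point exists, choose any unmarked point $c$, let $A=\{v \text{ unmarked}: d_{\max}(c,v)<R\}$, mark all points of $A$, and add $c$ to the output set $U'$. Return $U'$. Extract$(W,d,\sigma,k)$ (for $W\subseteq U$, $\sigma>0$): build the digraph $G$ on $W$ with an arc $ij$ ($i\ne j$) iff $d(i,j)<\sigma$. If $G$ contains a directed cycle, let $C$ be a chordless directed cycle of $G$ (no arcs of $G$ between non-consecutive vertices of the cycle). Let $G_c$ be the condensation of $G$ (vertices are strongly connected components), $M$ a maximum antichain of $G_c$ (a maximum set of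 pairwise mutually unreachable vertices), and $L$ a path in $G_c$ with $2k-1$ arcs that is a shortest path between its endpoints, or, if none exists, a longest path among shortest paths found in $G_c$; $|C|,|L|$ denote numbers of vertices. If $C$ exists, $|C|\ge 2|M|-1$ and $|C|\ge|L|$, let $I$ be the vertices of $C=(v_1,\dots,v_\ell)$ with odd indices; else if $2|M|-1\ge|L|$, let $I$ consist of one point of $G$ from each component in $M$; else let $I$ consist of one point of $G$ from each component on $L$ with odd index. If $|I|\ge k$, output $k$ points greedily selected from $I$ (repeatedly adding a point of $I$ maximizing the $d_{\min}$-distance to the already selected points); otherwise return nothing. BAC$(U,d,k)$: for every $R\in\{d(i,j)>0: i,j\in U, i\ne j\}$, compute $U'=$ Cluster$(U,d,R)$ and call Extract$(U',d,R/(2k),k)$; return the set with the largest $\operatorname{div}$ among all sets returned by Extract. *)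

theory Defs
  imports Complex_Main
begin

definition asym_pseudometric :: "'a set \<Rightarrow> ('a \<Rightarrow> 'a \<Rightarrow> real) \<Rightarrow> bool" where
  "asym_pseudometric U d \<longleftrightarrow> finite U \<and>
     (\<forall>u\<in>U. \<forall>v\<in>U. 0 \<le> d u v) \<and>
     (\<forall>u\<in>U. d u u = 0) \<and>
     (\<forall>u\<in>U. \<forall>v\<in>U. \<forall>w\<in>U. d u v \<le> d u w + d w v)"

definition dmin :: "('a \<Rightarrow> 'a \<Rightarrow> real) \<Rightarrow> 'a \<Rightarrow> 'a \<Rightarrow> real" where
  "dmin d u v = min (d u v) (d v u)"

definition dmax :: "('a \<Rightarrow> 'a \<Rightarrow> real) \<Rightarrow> 'a \<Rightarrow> 'a \<Rightarrow> real" where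
  "dmax d u v = max (d u v) (d v u)"

definition diver :: "('a \<Rightarrow> 'a \<Rightarrow> real) \<Rightarrow> 'a set \<Rightarrow> real" where
  "diver d S = Min {d u v | u v. u \<in> S \<and> v \<in> S \<and> u \<noteq> v}"

definition opt_div :: "'a set \<Rightarrow> ('a \<Rightarrow> 'a \<Rightarrow> real) \<Rightarrow> nat \<Rightarrow> real" where
  "opt_div U d k = Max {diver d T | T. T \<subseteq> U \<and> card T = k}"

section \<open>Cluster (nondeterministic: any unmarked centre may be chosen)\<close>

inductive cluster_run :: "('a \<Rightarrow> 'a \<Rightarrow> real) \<Rightarrow> real \<Rightarrow> 'a set \<Rightarrow> 'a set \<Rightarrow> 'a set \<Rightarrow> bool"
  for d R where
  stop: "cluster_run d R {} Out Out"
| step: "c \<in> Unm \<Longrightarrow>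
         cluster_run d R (Unm - {v \<in> Unm. dmax d c v < R}) (insert c Out) F \<Longrightarrow>
         cluster_run d R Unm Out F"

definition cluster_result :: "('a \<Rightarrow> 'a \<Rightarrow> real) \<Rightarrow> 'a set \<Rightarrow> real \<Rightarrow> 'a set \<Rightarrow> bool" where
  "cluster_result d U R U' \<longleftrightarrow> cluster_run d R U {} U'"

definition garc :: "('a \<Rightarrow> 'a \<Rightarrow> real) \<Rightarrow> real \<Rightarrow> 'a set \<Rightarrow> 'a \<Rightarrow> 'a \<Rightarrow> bool" where
  "garc d \<sigma> W i j \<longleftrightarrow> i \<in> W \<and> j \<in> W \<and> i \<noteq> j \<and> d i j < \<sigma>"

definition dicycle :: "('a \<Rightarrow> 'a \<Rightarrow> real) \<Rightarrow> real \<Rightarrow> 'a set \<Rightarrow> 'a list \<Rightarrow> bool" where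
  "dicycle d \<sigma> W cs \<longleftrightarrow> cs \<noteq> [] \<and> distinct cs \<and> set cs \<subseteq> W \<and>
     (\<forall>i < length cs. garc d \<sigma> W (cs ! i) (cs ! ((i + 1) mod length cs)))"

definition chordless_dicycle :: "('a \<Rightarrow> 'a \<Rightarrow> real) \<Rightarrow> real \<Rightarrow> 'a set \<Rightarrow> 'a list \<Rightarrow> bool" where
  "chordless_dicycle d \<sigma> W cs \<longleftrightarrow> dicycle d \<sigma> W cs \<and>
     (\<forall>i < length cs. \<forall>j < length cs.
        j \<noteq> i \<and> j \<noteq> (i + 1) mod length cs \<and> i \<noteq> (j + 1) mod length cs
        \<longrightarrow> \<not> garc d \<sigma> W (cs ! i) (cs ! j))"

definition has_dicycle :: "('a \<Rightarrow> 'a \<Rightarrow> real) \<Rightarrow> real \<Rightarrow> 'a set \<Rightarrow> bool" where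
  "has_dicycle d \<sigma> W \<longleftrightarrow> (\<exists>cs. dicycle d \<sigma> W cs)"

definition greach :: "('a \<Rightarrow> 'a \<Rightarrow> real) \<Rightarrow> real \<Rightarrow> 'a set \<Rightarrow> 'a \<Rightarrow> 'a \<Rightarrow> bool" where
  "greach d \<sigma> W u v \<longleftrightarrow> (u, v) \<in> {(i, j). garc d \<sigma> W i j}\<^sup>*"

text \<open>Strongly connected components = vertices of the condensation G_c.\<close>
definition gscc :: "('a \<Rightarrow> 'a \<Rightarrow> real) \<Rightarrow> real \<Rightarrow> 'a set \<Rightarrow> 'a \<Rightarrow> 'a set" where
  "gscc d \<sigma> W u = {v \<in> W. greach d \<sigma> W u v \<and> greach d \<sigma> W v u}"

definition gsccs :: "('a \<Rightarrow> 'a \<Rightarrow> real) \<Rightarrow> real \<Rightarrow> 'a set \<Rightarrow> 'a set set" where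
  "gsccs d \<sigma> W = gscc d \<sigma> W ` W"

definition creach :: "('a \<Rightarrow> 'a \<Rightarrow> real) \<Rightarrow> real \<Rightarrow> 'a set \<Rightarrow> 'a set \<Rightarrow> 'a set \<Rightarrow> bool" where
  "creach d \<sigma> W X Y \<longleftrightarrow> (\<exists>x\<in>X. \<exists>y\<in>Y. greach d \<sigma> W x y)"

definition carc :: "('a \<Rightarrow> 'a \<Rightarrow> real) \<Rightarrow> real \<Rightarrow> 'a set \<Rightarrow> 'a set \<Rightarrow> 'a set \<Rightarrow> bool" where
  "carc d \<sigma> W X Y \<longleftrightarrow> X \<noteq> Y \<and> (\<exists>x\<in>X. \<exists>y\<in>Y. garc d \<sigma> W x y)"

definition cantichain :: "('a \<Rightarrow> 'a \<Rightarrow> real) \<Rightarrow> real \<Rightarrow> 'a set \<Rightarrow> 'a set set \<Rightarrow> bool" where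
  "cantichain d \<sigma> W M \<longleftrightarrow> M \<subseteq> gsccs d \<sigma> W \<and>
     (\<forall>X\<in>M. \<forall>Y\<in>M. X \<noteq> Y \<longrightarrow> \<not> creach d \<sigma> W X Y)"

definition max_cantichain :: "('a \<Rightarrow> 'a \<Rightarrow> real) \<Rightarrow> real \<Rightarrow> 'a set \<Rightarrow> 'a set set \<Rightarrow> bool" where
  "max_cantichain d \<sigma> W M \<longleftrightarrow> cantichain d \<sigma> W M \<and>
     (\<forall>M'. cantichain d \<sigma> W M' \<longrightarrow> card M' \<le> card M)"

text \<open>A path in G_c as the nonempty list of its vertices (number of arcs = length - 1).\<close>
definition cpath :: "('a \<Rightarrow> 'a \<Rightarrow> real) \<Rightarrow> real \<Rightarrow> 'a set \<Rightarrow> 'a set list \<Rightarrow> bool" where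
  "cpath d \<sigma> W P \<longleftrightarrow> P \<noteq> [] \<and> distinct P \<and> set P \<subseteq> gsccs d \<sigma> W \<and>
     (\<forall>i. i + 1 < length P \<longrightarrow> carc d \<sigma> W (P ! i) (P ! (i + 1)))"

definition shortest_cpath :: "('a \<Rightarrow> 'a \<Rightarrow> real) \<Rightarrow> real \<Rightarrow> 'a set \<Rightarrow> 'a set list \<Rightarrow> bool" where
  "shortest_cpath d \<sigma> W P \<longleftrightarrow> cpath d \<sigma> W P \<and>
     (\<forall>Q. cpath d \<sigma> W Q \<and> hd Q = hd P \<and> last Q = last P \<longrightarrow> length P \<le> length Q)"

text \<open>Admissible choices of L: a shortest path with 2k-1 arcs, or, if none
  exists, a longest one among all shortest paths.\<close>
definition valid_L :: "('a \<Rightarrow> 'a \<Rightarrow> real) \<Rightarrow> real \<Rightarrow> 'a set \<Rightarrow> nat \<Rightarrow> 'a set list \<Rightarrow> bool" where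
  "valid_L d \<sigma> W k P \<longleftrightarrow> shortest_cpath d \<sigma> W P \<and>
     (length P = 2 * k \<or>
      ((\<nexists>Q. shortest_cpath d \<sigma> W Q \<and> length Q = 2 * k) \<and>
       (\<forall>Q. shortest_cpath d \<sigma> W Q \<longrightarrow> length Q \<le> length P)))"

text \<open>Greedy selection of k points of I: the list g records the selection order;
  the first point is arbitrary, each further point maximizes the d_min-distance
  to the already selected points.\<close>
definition setdist :: "('a \<Rightarrow> 'a \<Rightarrow> real) \<Rightarrow> 'a \<Rightarrow> 'a list \<Rightarrow> real" where
  "setdist d p xs = Min ((\<lambda>s. dmin d p s) ` set xs)"

definition greedy :: "('a \<Rightarrow> 'a \<Rightarrow> real) \<Rightarrow> 'a set \<Rightarrow> nat \<Rightarrow> 'a list \<Rightarrow> bool" where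
  "greedy d I k g \<longleftrightarrow> length g = k \<and> distinct g \<and> set g \<subseteq> I \<and>
     (\<forall>j. 0 < j \<and> j < k \<longrightarrow>
        (\<forall>p \<in> I - set (take j g). setdist d p (take j g) \<le> setdist d (g ! j) (take j g)))"

text \<open>res is a possible result of Extract(W,d,sigma,k) (None = returns nothing),
  over all admissible choices of C, M, L, representatives and greedy ties.\<close>
definition extract_result ::
  "('a \<Rightarrow> 'a \<Rightarrow> real) \<Rightarrow> 'a set \<Rightarrow> real \<Rightarrow> nat \<Rightarrow> 'a set option \<Rightarrow> bool" where
  "extract_result d W \<sigma> k res \<longleftrightarrow> (\<exists>C M L I.
     (has_dicycle d \<sigma> W \<longrightarrow> chordless_dicycle d \<sigma> W C) \<and>
     max_cantichain d \<sigma> W M \<and> valid_L d \<sigma> W k L \<and>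
     (if has_dicycle d \<sigma> W \<and> int (length C) \<ge> 2 * int (card M) - 1 \<and> length C \<ge> length L
      then I = {C ! i | i. i < length C \<and> even i}
      else if 2 * int (card M) - 1 \<ge> int (length L)
      then (\<exists>f. (\<forall>X\<in>M. f X \<in> X) \<and> I = f ` M)
      else (\<exists>f. (\<forall>X\<in>set L. f X \<in> X) \<and> I = f ` {L ! i | i. i < length L \<and> even i})) \<and>
     (if k \<le> card I then (\<exists>g. greedy d I k g \<and> res = Some (set g)) else res = None))"

definition bac_radii :: "'a set \<Rightarrow> ('a \<Rightarrow> 'a \<Rightarrow> real) \<Rightarrow> real set" where
  "bac_radii U d = {d i j | i j. i \<in> U \<and> j \<in> U \<and> i \<noteq> j \<and> d i j > 0}"

text \<open>A run of BAC: for each R, a Cluster output Uc R and an Extract output out R.\<close>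
definition bac_run ::
  "'a set \<Rightarrow> ('a \<Rightarrow> 'a \<Rightarrow> real) \<Rightarrow> nat \<Rightarrow> (real \<Rightarrow> 'a set) \<Rightarrow> (real \<Rightarrow> 'a set option) \<Rightarrow> bool" where
  "bac_run U d k Uc out \<longleftrightarrow> (\<forall>R \<in> bac_radii U d.
     cluster_result d U R (Uc R) \<and> extract_result d (Uc R) (R / (2 * real k)) k (out R))"

definition bac_returns ::
  "'a set \<Rightarrow> ('a \<Rightarrow> 'a \<Rightarrow> real) \<Rightarrow> (real \<Rightarrow> 'a set option) \<Rightarrow> 'a set \<Rightarrow> bool" where
  "bac_returns U d out S \<longleftrightarrow> (\<exists>R \<in> bac_radii U d. out R = Some S \<and>
     (\<forall>R' \<in> bac_radii U d. \<forall>S'. out R' = Some S' \<longrightarrow> diver d S' \<le> diver d S))"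

end

theory Submission
  imports Defs
begin


definition walk :: "('b \<Rightarrow> 'b \<Rightarrow> bool) \<Rightarrow> 'b list \<Rightarrow> bool" where
  "walk E xs \<longleftrightarrow> xs \<noteq> [] \<and> successively E xs"

lemma rtrancl_walk:
  assumes "(x, y) \<in> {(a, b). E a b}\<^sup>*"
  shows "\<exists>xs. walk E xs \<and> hd xs = x \<and> last xs = y"
  using assms
proof (induction rule: rtrancl_induct)
  case base
  then show ?case by (intro exI[of _ "[x]"]) (simp add: walk_def)
next
  case (step y z)
  then obtain xs where xs: "walk E xs" "hd xs = x" "last xs = y" by blast
  have "walk E (xs @ [z])" using xs step(2)
    by (auto simp: walk_def successively_append_iff)
  moreover have "hd (xs @ [z]) = x" using xs by (auto simp: walk_def)
  ultimately show ?case by (intro exI[of _ "xs @ [z]"]) simp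
qed

lemma walk_distinct:
  assumes "walk E xs"
  shows "\<exists>ys. walk E ys \<and> distinct ys \<and> hd ys = hd xs \<and> last ys = last xs \<and>
     set ys \<subseteq> set xs \<and> length ys \<le> length xs"
  using assms
proof (induction "length xs" arbitrary: xs rule: less_induct)
  case less
  show ?case
  proof (cases "distinct xs")
    case True
    then show ?thesis using less.prems by blast
  next
    case False
    then obtain as cs ds b where dec: "xs = as @ [b] @ cs @ [b] @ ds"
      using not_distinct_decomp by blast
    define zs where "zs = as @ [b] @ ds"
    have s: "successively E (as @ [b] @ cs @ [b] @ ds)" using less.prems unfolding dec walk_def by simp
    then have "successively E ((as @ [b] @ cs) @ ([b] @ ds))" by simp
    then have h1: "successively E ([b] @ ds)" unfolding successively_append_iff by blast
    have "walk E zs" using s h1 unfolding zs_def walk_def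
      by (auto simp: successively_append_iff)
    moreover have lz: "length zs < length xs" unfolding dec zs_def by simp
    ultimately obtain ys where ys: "walk E ys" "distinct ys" "hd ys = hd zs" "last ys = last zs"
       "set ys \<subseteq> set zs" "length ys \<le> length zs" using less.hyps by blast
    have "hd zs = hd xs" unfolding dec zs_def by (cases as) auto
    moreover have "last zs = last xs" unfolding dec zs_def by (cases ds) auto
    moreover have "set zs \<subseteq> set xs" unfolding dec zs_def by auto
    ultimately show ?thesis using ys lz by (intro exI[of _ ys]) auto
  qed
qed

lemma successively_take: "successively P xs \<Longrightarrow> successively P (take n xs)"
  by (metis append_take_drop_id successively_append_iff)

lemma successively_drop: "successively P xs \<Longrightarrow> successively P (drop n xs)"
  by (metis append_take_drop_id successively_append_iff)

section \<open>Basic graph facts\<close>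

lemma greach_refl: "greach d \<sigma> W u u"
  by (simp add: greach_def)

lemma greach_trans: "greach d \<sigma> W u v \<Longrightarrow> greach d \<sigma> W v w \<Longrightarrow> greach d \<sigma> W u w"
  unfolding greach_def by (meson rtrancl_trans)

lemma garc_greach: "garc d \<sigma> W u v \<Longrightarrow> greach d \<sigma> W u v"
  unfolding greach_def by (simp add: r_into_rtrancl)

lemma gscc_self: "u \<in> W \<Longrightarrow> u \<in> gscc d \<sigma> W u"
  by (simp add: gscc_def greach_refl)

lemma gscc_sub: "gscc d \<sigma> W u \<subseteq> W"
  by (auto simp: gscc_def)

lemma gsccs_sub: "X \<in> gsccs d \<sigma> W \<Longrightarrow> X \<subseteq> W"
  by (auto simp: gsccs_def gscc_def)

lemma gsccs_eq: "X \<in> gsccs d \<sigma> W \<Longrightarrow> a \<in> X \<Longrightarrow> X = gscc d \<sigma> W a"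
  unfolding gsccs_def gscc_def by (auto intro: greach_trans)

lemma gsccs_reach: "X \<in> gsccs d \<sigma> W \<Longrightarrow> a \<in> X \<Longrightarrow> b \<in> X \<Longrightarrow> greach d \<sigma> W a b"
  unfolding gsccs_def gscc_def by (auto intro: greach_trans)

lemma gsccs_nonempty: "X \<in> gsccs d \<sigma> W \<Longrightarrow> X \<noteq> {}"
  unfolding gsccs_def using gscc_self by fastforce

lemma gsccs_disj: "X \<in> gsccs d \<sigma> W \<Longrightarrow> Y \<in> gsccs d \<sigma> W \<Longrightarrow> z \<in> X \<Longrightarrow> z \<in> Y \<Longrightarrow> X = Y"
  using gsccs_eq by metis

lemma cycle_from_reach:
  assumes "u \<noteq> v" "greach d \<sigma> W u v" "greach d \<sigma> W v u"
  shows "has_dicycle d \<sigma> W"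
proof -
  let ?E = "{(i, j). garc d \<sigma> W i j}"
  have "(u, v) \<in> ?E\<^sup>+" using assms(1,2) unfolding greach_def
    by (meson rtranclD)
  then obtain w where uw0: "(u, w) \<in> ?E" and wv: "(w, v) \<in> ?E\<^sup>*"
    using tranclD by metis
  then have uw: "garc d \<sigma> W u w" by simp
  have "greach d \<sigma> W w u" using wv assms(3) unfolding greach_def by (meson rtrancl_trans)
  then obtain xs where xs: "walk (garc d \<sigma> W) xs" "hd xs = w" "last xs = u"
    using rtrancl_walk[of w u "garc d \<sigma> W"] unfolding greach_def by blast
  then obtain ys where ys: "walk (garc d \<sigma> W) ys" "distinct ys" "hd ys = w" "last ys = u"
    using walk_distinct[of "garc d \<sigma> W" xs] by auto
  have wu: "w \<noteq> u" using uw by (auto simp: garc_def)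
  have len: "length ys \<ge> 2"
  proof (rule ccontr)
    assume "\<not> ?thesis"
    moreover have "ys \<noteq> []" using ys by (simp add: walk_def)
    moreover have "length ys \<noteq> 0" using \<open>ys \<noteq> []\<close> by simp
    ultimately have "length ys = 1" by linarith
    then obtain y where "ys = [y]" by (metis One_nat_def length_0_conv length_Suc_conv)
    then show False using ys wu by simp
  qed
  have "dicycle d \<sigma> W ys"
    unfolding dicycle_def
  proof (intro conjI allI impI)
    show "ys \<noteq> []" using ys by (simp add: walk_def)
    show "distinct ys" by fact
    show "set ys \<subseteq> W"
    proof
      fix x assume "x \<in> set ys"
      then obtain i where i: "i < length ys" "ys ! i = x" by (auto simp: in_set_conv_nth)
      show "x \<in> W"
      proof (cases "Suc i < length ys")
        case True
        then show ?thesis using ys(1) i successively_nth[of "garc d \<sigma> W" ys i]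
          by (auto simp: walk_def garc_def)
      next
        case False
        then have "i = length ys - 1" using i by simp
        moreover have "ys \<noteq> []" using ys by (simp add: walk_def)
        ultimately have "x = last ys" using i by (simp add: last_conv_nth)
        then show ?thesis using uw ys by (auto simp: garc_def)
      qed
    qed
    fix i assume i: "i < length ys"
    show "garc d \<sigma> W (ys ! i) (ys ! ((i + 1) mod length ys))"
    proof (cases "Suc i < length ys")
      case True
      then show ?thesis using ys(1) successively_nth[of "garc d \<sigma> W" ys i] by (auto simp: walk_def)
    next
      case False
      then have "i = length ys - 1" using i by simp
      moreover have "ys \<noteq> []" using ys by (simp add: walk_def)
      ultimately have "ys ! i = last ys" by (simp add: last_conv_nth)
      then have "ys ! i = u" using ys by simp
      have "i + 1 = length ys" using len \<open>i = length ys - 1\<close> by simp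
      then have "(i + 1) mod length ys = 0" by simp
      note \<open>ys ! i = u\<close> this
      moreover have "ys ! 0 = w" using ys by (simp add: hd_conv_nth walk_def)
      ultimately show ?thesis using uw by simp
    qed
  qed
  then show ?thesis by (auto simp: has_dicycle_def)
qed

lemma dag_gscc:
  assumes "\<not> has_dicycle d \<sigma> W" "x \<in> W"
  shows "gscc d \<sigma> W x = {x}"
proof -
  have "v = x" if "v \<in> gscc d \<sigma> W x" for v
    using that assms cycle_from_reach[of x v d \<sigma> W] unfolding gscc_def by blast
  then show ?thesis using gscc_self[OF assms(2)] by blast
qed



lemma walk_append: "walk E xs \<Longrightarrow> walk E ys \<Longrightarrow> E (last xs) (hd ys) \<Longrightarrow> walk E (xs @ ys)"
  by (auto simp: walk_def successively_append_iff)

lemma cpath_alt: "cpath d \<sigma> W P \<longleftrightarrow> walk (carc d \<sigma> W) P \<and> distinct P \<and> set P \<subseteq> gsccs d \<sigma> W"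
  unfolding cpath_def walk_def successively_conv_nth by auto

lemma cpath_nth_carc: "cpath d \<sigma> W P \<Longrightarrow> Suc i < length P \<Longrightarrow> carc d \<sigma> W (P ! i) (P ! Suc i)"
  unfolding cpath_def by auto

lemma shorten_walk_cpath:
  assumes "walk (carc d \<sigma> W) Z" "set Z \<subseteq> gsccs d \<sigma> W"
  shows "\<exists>Q. cpath d \<sigma> W Q \<and> hd Q = hd Z \<and> last Q = last Z \<and> length Q \<le> length Z"
proof -
  obtain ys where "walk (carc d \<sigma> W) ys" "distinct ys" "hd ys = hd Z" "last ys = last Z"
     "set ys \<subseteq> set Z" "length ys \<le> length Z" using walk_distinct[OF assms(1)] by blast
  then show ?thesis using assms(2) unfolding cpath_alt by blast
qed

lemma shortest_prefix:
  assumes sp: "shortest_cpath d \<sigma> W P" and n: "0 < n" "n \<le> length P"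
  shows "shortest_cpath d \<sigma> W (take n P)"
proof -
  have cp: "cpath d \<sigma> W P" using sp by (simp add: shortest_cpath_def)
  then have wP: "walk (carc d \<sigma> W) P" "distinct P" "set P \<subseteq> gsccs d \<sigma> W" by (auto simp: cpath_alt)
  have ct: "cpath d \<sigma> W (take n P)" unfolding cpath_alt
    using wP n by (auto simp: walk_def successively_take dest: in_set_takeD)
  have hdt: "hd (take n P) = hd P" using n by simp
  have lastt: "last (take n P) = P ! (n - 1)"
  proof -
    have "take n P \<noteq> []" using n by auto
    then have "last (take n P) = take n P ! (length (take n P) - 1)" by (simp add: last_conv_nth)
    also have "\<dots> = P ! (n - 1)" using n by (simp add: min_def)
    finally show ?thesis .
  qed
  show ?thesis unfolding shortest_cpath_def
  proof (intro conjI allI impI ct)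
    fix Q assume Q: "cpath d \<sigma> W Q \<and> hd Q = hd (take n P) \<and> last Q = last (take n P)"
    show "length (take n P) \<le> length Q"
    proof (rule ccontr)
      assume "\<not> ?thesis"
      then have lQ: "length Q < n" using n by simp
      have wQ: "walk (carc d \<sigma> W) Q" "set Q \<subseteq> gsccs d \<sigma> W" using Q by (auto simp: cpath_alt)
      show False
      proof (cases "n = length P")
        case True
        then have "hd Q = hd P" "last Q = last P" using Q hdt lastt n
          by (auto simp: last_conv_nth walk_def)
        then have "length P \<le> length Q" using sp Q unfolding shortest_cpath_def by blast
        then show False using lQ True by simp
      next
        case False
        then have nl: "n < length P" using n by simp
        define Z where "Z = Q @ drop n P"
        have wd: "walk (carc d \<sigma> W) (drop n P)" using wP nl by (auto simp: walk_def successively_drop)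
        have "carc d \<sigma> W (last Q) (hd (drop n P))"
          using Q lastt cpath_nth_carc[OF cp, of "n - 1"] nl n by (simp add: hd_drop_conv_nth)
        then have wZ: "walk (carc d \<sigma> W) Z" unfolding Z_def using walk_append wQ wd by blast
        have sZ: "set Z \<subseteq> gsccs d \<sigma> W" using wQ wP unfolding Z_def by (auto dest: in_set_dropD)
        obtain Q' where Q': "cpath d \<sigma> W Q'" "hd Q' = hd Z" "last Q' = last Z" "length Q' \<le> length Z"
          using shorten_walk_cpath[OF wZ sZ] by blast
        have "hd Z = hd P" using Q hdt wQ unfolding Z_def by (simp add: walk_def)
        moreover have "last Z = last P" unfolding Z_def using nl by simp
        ultimately have "length P \<le> length Q'" using sp Q' unfolding shortest_cpath_def by metis
        moreover have "length Z < length P" unfolding Z_def using lQ nl by simp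
        ultimately show False using Q' by simp
      qed
    qed
  qed
qed

lemma shortest_no_skip:
  assumes sp: "shortest_cpath d \<sigma> W P" and ij: "Suc i < j" "j < length P"
  shows "\<not> carc d \<sigma> W (P ! i) (P ! j)"
proof
  assume arc: "carc d \<sigma> W (P ! i) (P ! j)"
  have cp: "cpath d \<sigma> W P" using sp by (simp add: shortest_cpath_def)
  then have wP: "walk (carc d \<sigma> W) P" "distinct P" "set P \<subseteq> gsccs d \<sigma> W" by (auto simp: cpath_alt)
  define Z where "Z = take (Suc i) P @ drop j P"
  have w1: "walk (carc d \<sigma> W) (take (Suc i) P)" using wP by (auto simp: walk_def successively_take)
  have w2: "walk (carc d \<sigma> W) (drop j P)" using wP ij by (auto simp: walk_def successively_drop)
  have "last (take (Suc i) P) = P ! i" using ij by (simp add: take_Suc_conv_app_nth)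
  moreover have "hd (drop j P) = P ! j" using ij by (simp add: hd_drop_conv_nth)
  ultimately have wZ: "walk (carc d \<sigma> W) Z" unfolding Z_def using walk_append w1 w2 arc by metis
  have sZ: "set Z \<subseteq> gsccs d \<sigma> W" using wP unfolding Z_def by (auto dest: in_set_dropD in_set_takeD)
  obtain Q' where Q': "cpath d \<sigma> W Q'" "hd Q' = hd Z" "last Q' = last Z" "length Q' \<le> length Z"
    using shorten_walk_cpath[OF wZ sZ] by blast
  have "hd Z = hd P" unfolding Z_def using wP by (simp add: walk_def)
  moreover have "last Z = last P" unfolding Z_def using ij by simp
  ultimately have "length P \<le> length Q'" using sp Q' unfolding shortest_cpath_def by metis
  moreover have "length Z < length P" unfolding Z_def using ij by simp
  ultimately show False using Q' by simp
qed

lemma cpath_reach: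
  assumes cp: "cpath d \<sigma> W P" and ij: "i \<le> j" "j < length P"
    and a: "a \<in> P ! i" and b: "b \<in> P ! j"
  shows "greach d \<sigma> W a b"
  using ij b
proof (induction j arbitrary: b)
  case 0
  then have "i = 0" by simp
  moreover have "P ! 0 \<in> gsccs d \<sigma> W" using cp 0 by (auto simp: cpath_def)
  ultimately show ?case using gsccs_reach a 0 by metis
next
  case (Suc j)
  show ?case
  proof (cases "i = Suc j")
    case True
    moreover have "P ! Suc j \<in> gsccs d \<sigma> W" using cp Suc by (auto simp: cpath_def)
    ultimately show ?thesis using gsccs_reach a Suc by metis
  next
    case False
    then have ij': "i \<le> j" using Suc by simp
    obtain x y where xy: "x \<in> P ! j" "y \<in> P ! Suc j" "garc d \<sigma> W x y"
      using cpath_nth_carc[OF cp, of j] Suc by (auto simp: carc_def)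
    have "greach d \<sigma> W a x" using Suc.IH[OF ij'] Suc xy by simp
    moreover have "P ! Suc j \<in> gsccs d \<sigma> W" using cp Suc by (auto simp: cpath_def)
    then have "greach d \<sigma> W y b" using gsccs_reach xy Suc by metis
    ultimately show ?thesis using xy(3) garc_greach greach_trans by metis
  qed
qed

lemma pm_facts:
  assumes "asym_pseudometric U d"
  shows "finite U" "\<And>u. u \<in> U \<Longrightarrow> d u u = 0" "\<And>u v. u \<in> U \<Longrightarrow> v \<in> U \<Longrightarrow> 0 \<le> d u v"
    "\<And>u v w. u \<in> U \<Longrightarrow> v \<in> U \<Longrightarrow> w \<in> U \<Longrightarrow> d u v \<le> d u w + d w v"
  using assms unfolding asym_pseudometric_def by auto

lemma dag_cpath_dist:
  assumes pm: "asym_pseudometric U d" and WU: "W \<subseteq> U" and dag: "\<not> has_dicycle d \<sigma> W"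
    and cp: "cpath d \<sigma> W P" and a: "a \<in> P ! 0" and j: "j < length P" and b: "b \<in> P ! j"
  shows "d a b \<le> real j * \<sigma>"
  using j b
proof (induction j arbitrary: b)
  case 0
  have "P ! 0 \<in> gsccs d \<sigma> W" using cp 0 by (auto simp: cpath_def)
  then obtain x where "x \<in> W" "P ! 0 = gscc d \<sigma> W x" by (auto simp: gsccs_def)
  then have "P ! 0 = {x}" using dag_gscc[OF dag] by simp
  then have "b = a" "a \<in> W" using a 0 \<open>x \<in> W\<close> by auto
  then show ?case using pm_facts(2)[OF pm] WU by auto
next
  case (Suc j)
  obtain x y where xy: "x \<in> P ! j" "y \<in> P ! Suc j" "garc d \<sigma> W x y"
    using cpath_nth_carc[OF cp, of j] Suc by (auto simp: carc_def)
  have "P ! Suc j \<in> gsccs d \<sigma> W" using cp Suc by (auto simp: cpath_def)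
  then obtain z where "z \<in> W" "P ! Suc j = gscc d \<sigma> W z" by (auto simp: gsccs_def)
  then have "P ! Suc j = {z}" using dag_gscc[OF dag] by simp
  then have yb: "y = b" using xy Suc by simp
  have ax: "d a x \<le> real j * \<sigma>" using Suc xy by simp
  have "P ! 0 \<in> gsccs d \<sigma> W" using cp by (auto simp: cpath_def)
  then have "a \<in> W" using a gsccs_sub by blast
  then have "d a b \<le> d a x + d x b" using pm_facts(4)[OF pm] xy yb WU by (auto simp: garc_def)
  moreover have "d x b < \<sigma>" using xy yb by (auto simp: garc_def)
  ultimately show ?case using ax by (simp add: algebra_simps)
qed



lemma dicycle_arc: "dicycle d \<sigma> W cs \<Longrightarrow> a < length cs \<Longrightarrow> garc d \<sigma> W (cs ! a) (cs ! ((a + 1) mod length cs))"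
  unfolding dicycle_def by blast

lemma dicycle_len2: assumes "dicycle d \<sigma> W cs" shows "2 \<le> length cs"
proof (rule ccontr)
  assume "\<not> ?thesis"
  moreover have "cs \<noteq> []" using assms by (simp add: dicycle_def)
  moreover have "0 < length cs" using \<open>cs \<noteq> []\<close> by simp
  ultimately have "length cs = 1" by linarith
  then show False using dicycle_arc[OF assms, of 0] by (simp add: garc_def)
qed

lemma cycle_length:
  assumes pm: "asym_pseudometric U d" and WU: "W \<subseteq> U" and sig: "\<sigma> > 0" and k: "1 \<le> k"
    and sep: "\<forall>x\<in>W. \<forall>y\<in>W. x \<noteq> y \<longrightarrow> dmax d x y \<ge> 2 * real k * \<sigma>"
    and cyc: "dicycle d \<sigma> W cs"
  shows "2 * k + 1 \<le> length cs"
proof -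
  define l where "l = length cs"
  have l2: "2 \<le> l" using dicycle_len2[OF cyc] by (simp add: l_def)
  have inW: "\<And>a. a < l \<Longrightarrow> cs ! a \<in> W" using cyc unfolding dicycle_def l_def by auto
  have claim: "d (cs ! 1) (cs ! ((1 + t) mod l)) \<le> real t * \<sigma>" for t
  proof (induction t)
    case 0
    have "1 mod l = 1" using l2 by simp
    then show ?case using pm_facts(2)[OF pm] inW[of 1] l2 WU by auto
  next
    case (Suc t)
    define a where "a = (1 + t) mod l"
    have al: "a < l" using l2 by (simp add: a_def)
    have nx: "(a + 1) mod l = (1 + Suc t) mod l" unfolding a_def by (simp add: mod_Suc_eq)
    have arc: "garc d \<sigma> W (cs ! a) (cs ! ((1 + Suc t) mod l))"
      using dicycle_arc[OF cyc, of a] al nx by (simp add: l_def)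
    have b: "(1 + Suc t) mod l < l" using l2 by simp
    have "d (cs ! 1) (cs ! ((1 + Suc t) mod l)) \<le> d (cs ! 1) (cs ! a) + d (cs ! a) (cs ! ((1 + Suc t) mod l))"
      using pm_facts(4)[OF pm] inW[OF al] inW[OF b] inW[of 1] l2 WU by auto
    moreover have "d (cs ! a) (cs ! ((1 + Suc t) mod l)) < \<sigma>" using arc by (simp add: garc_def)
    ultimately show ?case using Suc.IH by (simp add: a_def algebra_simps)
  qed
  have "(1 + (l - 1)) mod l = 0" using l2 by simp
  then have d10: "d (cs ! 1) (cs ! 0) \<le> real (l - 1) * \<sigma>" using claim[of "l - 1"] by simp
  have "(0 + 1) mod l = 1" using l2 by simp
  then have "garc d \<sigma> W (cs ! 0) (cs ! 1)" using dicycle_arc[OF cyc, of 0] l2 unfolding l_def by fastforce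
  then have d01: "d (cs ! 0) (cs ! 1) < \<sigma>" by (simp add: garc_def)
  have ne: "cs ! 0 \<noteq> cs ! 1" using cyc l2 unfolding dicycle_def l_def by (simp add: nth_eq_iff_index_eq)
  have "dmax d (cs ! 0) (cs ! 1) \<ge> 2 * real k * \<sigma>" using sep inW[of 0] inW[of 1] l2 ne by auto
  moreover have "\<sigma> \<le> 2 * real k * \<sigma>" using k sig by simp
  ultimately have "2 * real k * \<sigma> \<le> real (l - 1) * \<sigma>" using d01 d10 by (auto simp: dmax_def)
  then have "2 * real k \<le> real (l - 1)" using sig by simp
  then show ?thesis using l2 unfolding l_def by linarith
qed

lemma chordless_exists:
  assumes "has_dicycle d \<sigma> W"
  shows "\<exists>C. chordless_dicycle d \<sigma> W C"
proof -
  obtain cs0 where "dicycle d \<sigma> W cs0" using assms by (auto simp: has_dicycle_def)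
  then obtain cs where cyc: "dicycle d \<sigma> W cs" and mn: "\<And>cs'. dicycle d \<sigma> W cs' \<Longrightarrow> length cs \<le> length cs'"
    using ex_has_least_nat[of "dicycle d \<sigma> W" cs0 length] by blast
  define l where "l = length cs"
  have l2: "2 \<le> l" using dicycle_len2[OF cyc] by (simp add: l_def)
  have "chordless_dicycle d \<sigma> W cs"
    unfolding chordless_dicycle_def
  proof (intro conjI cyc allI impI notI)
    fix i j
    assume ij: "i < length cs" "j < length cs" and
      cond: "j \<noteq> i \<and> j \<noteq> (i + 1) mod length cs \<and> i \<noteq> (j + 1) mod length cs"
      and chord: "garc d \<sigma> W (cs ! i) (cs ! j)"
    define idx where "idx t = (if j + t < l then j + t else j + t - l)" for t
    define m where "m = (if j \<le> i then i - j + 1 else i + l - j + 1)"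
    have ml: "m < l"
    proof (cases "j \<le> i")
      case True
      have "\<not> (j = 0 \<and> i = l - 1)"
      proof
        assume a: "j = 0 \<and> i = l - 1"
        have "(l - 1 + 1) mod l = 0" using l2 by simp
        then show False using a cond by (simp add: l_def)
      qed
      then show ?thesis using True ij unfolding m_def l_def by auto
    next
      case False
      have "i + 1 < l" using False ij by (simp add: l_def)
      then have "j \<noteq> i + 1" using cond by (simp add: l_def)
      then show ?thesis using False ij unfolding m_def l_def by auto
    qed
    have m1: "1 \<le> m" unfolding m_def by auto
    have idxl: "t < m \<Longrightarrow> idx t < l" for t using ml ij unfolding idx_def l_def by auto
    have idx_last: "idx (m - 1) = i" using ij unfolding idx_def m_def l_def by auto
    have idx0: "idx 0 = j" using ij unfolding idx_def l_def by auto
    have idx_next: "t + 1 < m \<Longrightarrow> (idx t + 1) mod l = idx (t + 1)" for t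
    proof -
      assume t: "t + 1 < m"
      consider "j + t + 1 < l" | "j + t + 1 = l" | "j + t \<ge> l" by linarith
      then show ?thesis
      proof cases
        case 1 then show ?thesis unfolding idx_def by simp
      next
        case 2 then show ?thesis unfolding idx_def by simp
      next
        case 3
        have "j + t + 1 - l < l" using t ml ij unfolding l_def by linarith
        then show ?thesis using 3 unfolding idx_def by simp
      qed
    qed
    have idx_inj: "inj_on idx {0..<m}"
      unfolding inj_on_def idx_def using ml by auto
    define cs' where "cs' = map (\<lambda>t. cs ! idx t) [0..<m]"
    have len': "length cs' = m" by (simp add: cs'_def)
    have "dicycle d \<sigma> W cs'"
      unfolding dicycle_def
    proof (intro conjI allI impI)
      show "cs' \<noteq> []" using m1 by (auto simp: cs'_def)
      have "inj_on (\<lambda>t. cs ! idx t) {0..<m}"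
        using idx_inj idxl cyc unfolding inj_on_def dicycle_def l_def
        by (auto simp: nth_eq_iff_index_eq)
      then show "distinct cs'" by (simp add: cs'_def distinct_map)
      show "set cs' \<subseteq> W" using cyc idxl unfolding cs'_def dicycle_def l_def by auto
      fix t assume t: "t < length cs'"
      show "garc d \<sigma> W (cs' ! t) (cs' ! ((t + 1) mod length cs'))"
      proof (cases "t + 1 < m")
        case True
        have "garc d \<sigma> W (cs ! idx t) (cs ! ((idx t + 1) mod l))"
          using dicycle_arc[OF cyc, of "idx t"] idxl[of t] t len' by (simp add: l_def)
        then show ?thesis using True idx_next[OF True] len' t by (simp add: cs'_def)
      next
        case False
        then have "t = m - 1" using t len' by simp
        then have "cs' ! t = cs ! i" "cs' ! ((t + 1) mod length cs') = cs ! j"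
          using idx_last idx0 m1 len' by (auto simp: cs'_def)
        then show ?thesis using chord by simp
      qed
    qed
    then have "l \<le> m" using mn[of cs'] len' by (simp add: l_def)
    then show False using ml by simp
  qed
  then show ?thesis by blast
qed



lemma dmin_sym: "dmin d x y = dmin d y x"
  by (simp add: dmin_def min.commute)

lemma greedy_exists:
  assumes fin: "finite I" and kI: "k \<le> card I"
  shows "\<exists>g. greedy d I k g"
proof -
  have "\<exists>g. length g = j \<and> distinct g \<and> set g \<subseteq> I \<and>
     (\<forall>j'. 0 < j' \<and> j' < j \<longrightarrow>
        (\<forall>p \<in> I - set (take j' g). setdist d p (take j' g) \<le> setdist d (g ! j') (take j' g)))"
    if "j \<le> k" for j
    using that
  proof (induction j)
    case 0
    then show ?case by (intro exI[of _ "[]"]) simp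
  next
    case (Suc j)
    then obtain g where g: "length g = j" "distinct g" "set g \<subseteq> I"
      "\<forall>j'. 0 < j' \<and> j' < j \<longrightarrow>
        (\<forall>p \<in> I - set (take j' g). setdist d p (take j' g) \<le> setdist d (g ! j') (take j' g))"
      by auto
    define A where "A = I - set g"
    have "card (set g) = j" using g by (simp add: distinct_card)
    then have "card A > 0" unfolding A_def using g(3) fin Suc.prems kI
      by (simp add: card_Diff_subset finite_subset)
    then have Ane: "A \<noteq> {}" "finite A" using card_gt_0_iff by blast+
    define mx where "mx = Max ((\<lambda>p. setdist d p g) ` A)"
    have "mx \<in> (\<lambda>p. setdist d p g) ` A" unfolding mx_def using Ane by (intro Max_in) auto
    then obtain x where x: "x \<in> A" "setdist d x g = mx" by auto
    have xmax: "\<forall>p\<in>A. setdist d p g \<le> setdist d x g" using Ane x unfolding mx_def by auto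
    define g' where "g' = g @ [x]"
    show ?case
    proof (intro exI[of _ g'] conjI allI impI)
      show "length g' = Suc j" using g by (simp add: g'_def)
      show "distinct g'" using g x by (simp add: g'_def A_def)
      show "set g' \<subseteq> I" using g x by (auto simp: g'_def A_def)
      fix j' assume j': "0 < j' \<and> j' < Suc j"
      show "\<forall>p\<in>I - set (take j' g'). setdist d p (take j' g') \<le> setdist d (g' ! j') (take j' g')"
      proof (cases "j' < j")
        case True
        then have "take j' g' = take j' g" "g' ! j' = g ! j'" using g by (auto simp: g'_def nth_append)
        then show ?thesis using g(4) j' True by simp
      next
        case False
        then have "j' = j" using j' by simp
        then have "take j' g' = g" "g' ! j' = x" using g by (auto simp: g'_def)
        then show ?thesis using xmax unfolding A_def by simp
      qed
    qed
  qed
  from this[of k] show ?thesis unfolding greedy_def by auto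
qed

lemma greedy_basic:
  assumes "greedy d I k g"
  shows "length g = k" "distinct g" "set g \<subseteq> I" "card (set g) = k"
  using assms unfolding greedy_def by (auto simp: distinct_card)

lemma setdist_ge:
  assumes "xs \<noteq> []" "\<forall>s\<in>set xs. c \<le> dmin d p s"
  shows "c \<le> setdist d p xs"
  using assms unfolding setdist_def by (subst Min_ge_iff) auto

lemma setdist_le:
  assumes "s \<in> set xs"
  shows "setdist d p xs \<le> dmin d p s"
  using assms unfolding setdist_def by (intro Min_le) auto

lemma greedy_almost:
  assumes gr: "greedy d I k g" and fin: "finite I" and card: "k + 1 \<le> card I"
    and good: "\<forall>x\<in>I. \<forall>y\<in>I. x \<noteq> y \<and> {x, y} \<noteq> {a, b} \<longrightarrow> c \<le> dmin d x y"
  shows "\<forall>x\<in>set g. \<forall>y\<in>set g. x \<noteq> y \<longrightarrow> c \<le> dmin d x y"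
proof -
  note gb = greedy_basic[OF gr]
  have key: "c \<le> dmin d (g ! j) (g ! i)" if ij: "i < j" "j < k" for i j
  proof (rule ccontr)
    assume bad: "\<not> ?thesis"
    have gi: "g ! i \<in> I" "g ! j \<in> I" using gb ij by (auto dest: nth_mem)
    have neq: "g ! j \<noteq> g ! i" using gb ij by (simp add: nth_eq_iff_index_eq)
    then have ab: "{g ! j, g ! i} = {a, b}" using good gi bad by blast
    define T where "T = take j g"
    have "card (set T) = j" using gb ij by (simp add: T_def distinct_card)
    moreover have "set T \<subseteq> I" using gb by (auto simp: T_def dest: in_set_takeD)
    ultimately have cR: "card (I - set T) \<ge> 2" using card ij fin
      by (simp add: card_Diff_subset finite_subset)
    have gjR: "g ! j \<in> I - set T" using gi gb ij
      by (auto simp: T_def in_set_conv_nth nth_eq_iff_index_eq)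
    have "I - set T - {g ! j} \<noteq> {}"
    proof
      assume "I - set T - {g ! j} = {}"
      then have "I - set T \<subseteq> {g ! j}" by auto
      then have "card (I - set T) \<le> card {g ! j}" by (intro card_mono) auto
      then have "card (I - set T) \<le> 1" by simp
      then show False using cR by simp
    qed
    then obtain p where p: "p \<in> I" "p \<notin> set T" "p \<noteq> g ! j" by auto
    have giT: "g ! i \<in> set T" using ij gb by (auto simp: T_def in_set_conv_nth)
    have pab: "p \<notin> {a, b}" using ab p giT by auto
    have "\<forall>s\<in>set T. c \<le> dmin d p s"
    proof
      fix s assume s: "s \<in> set T"
      then have "s \<in> I" "p \<noteq> s" using p \<open>set T \<subseteq> I\<close> by auto
      moreover have "{p, s} \<noteq> {a, b}" using pab by auto
      ultimately show "c \<le> dmin d p s" using good p by blast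
    qed
    moreover have "T \<noteq> []" using ij gb(1) unfolding T_def by (cases g) auto
    ultimately have "c \<le> setdist d p T" by (rule setdist_ge[rotated])
    moreover have "setdist d p T \<le> setdist d (g ! j) T"
      using gr p ij unfolding greedy_def T_def by auto
    moreover have "setdist d (g ! j) T \<le> dmin d (g ! j) (g ! i)" using setdist_le[OF giT] by simp
    ultimately show False using bad by simp
  qed
  show ?thesis
  proof (intro ballI impI)
    fix x y assume xy: "x \<in> set g" "y \<in> set g" "x \<noteq> y"
    then obtain i j where "i < k" "j < k" "g ! i = x" "g ! j = y" using gb by (auto simp: in_set_conv_nth)
    then show "c \<le> dmin d x y" using key[of i j] key[of j i] xy(3) dmin_sym[of d x y]
      by (cases i j rule: linorder_cases) auto
  qed
qed



lemma finite_gsccs: "finite W \<Longrightarrow> finite (gsccs d \<sigma> W)"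
  by (simp add: gsccs_def)

lemma cpath_length_bound:
  assumes "finite W" "cpath d \<sigma> W Q"
  shows "length Q \<le> card (gsccs d \<sigma> W)"
proof -
  have "length Q = card (set Q)" using assms by (simp add: cpath_def distinct_card)
  also have "\<dots> \<le> card (gsccs d \<sigma> W)" using assms by (intro card_mono finite_gsccs) (auto simp: cpath_def)
  finally show ?thesis .
qed

lemma max_cantichain_exists:
  assumes "finite W"
  shows "\<exists>M. max_cantichain d \<sigma> W M"
proof -
  have "cantichain d \<sigma> W {}" by (simp add: cantichain_def)
  moreover have "\<forall>A. cantichain d \<sigma> W A \<longrightarrow> card A < card (gsccs d \<sigma> W) + 1"
    using assms by (auto simp: cantichain_def intro!: card_mono finite_gsccs le_imp_less_Suc)
  ultimately obtain M where "cantichain d \<sigma> W M" "\<forall>A. cantichain d \<sigma> W A \<longrightarrow> card A \<le> card M"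
    using Lattices_Big.ex_has_greatest_nat[of "cantichain d \<sigma> W" "{}" card] by blast
  then show ?thesis unfolding max_cantichain_def by blast
qed

lemma valid_L_exists:
  assumes "finite W" "W \<noteq> {}"
  shows "\<exists>L. valid_L d \<sigma> W k L"
proof (cases "\<exists>Q. shortest_cpath d \<sigma> W Q \<and> length Q = 2 * k")
  case True
  then show ?thesis unfolding valid_L_def by blast
next
  case False
  obtain w where w: "w \<in> W" using assms by auto
  have "cpath d \<sigma> W [gscc d \<sigma> W w]" using w by (simp add: cpath_def gsccs_def)
  then have "shortest_cpath d \<sigma> W [gscc d \<sigma> W w]"
    unfolding shortest_cpath_def by (auto simp: cpath_def Suc_le_eq)
  moreover have "\<forall>Q. shortest_cpath d \<sigma> W Q \<longrightarrow> length Q < card (gsccs d \<sigma> W) + 1"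
    using cpath_length_bound[OF assms(1)] by (auto simp: shortest_cpath_def le_imp_less_Suc)
  ultimately obtain L where "shortest_cpath d \<sigma> W L" "\<forall>Q. shortest_cpath d \<sigma> W Q \<longrightarrow> length Q \<le> length L"
    using Lattices_Big.ex_has_greatest_nat[of "shortest_cpath d \<sigma> W" _ length] by blast
  then show ?thesis using False unfolding valid_L_def by blast
qed

lemma extract_exists:
  assumes fin: "finite W" and ne: "W \<noteq> {}"
  shows "\<exists>res. extract_result d W \<sigma> k res"
proof -
  obtain C where C: "has_dicycle d \<sigma> W \<longrightarrow> chordless_dicycle d \<sigma> W C"
    using chordless_exists by blast
  obtain M where M: "max_cantichain d \<sigma> W M" using max_cantichain_exists[OF fin] by blast
  obtain L where L: "valid_L d \<sigma> W k L" using valid_L_exists[OF fin ne] by blast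
  define f :: "'a set \<Rightarrow> 'a" where "f X = (SOME x. x \<in> X)" for X
  have fX: "f X \<in> X" if "X \<in> gsccs d \<sigma> W" for X
    using gsccs_nonempty[OF that] unfolding f_def by (simp add: some_in_eq)
  have Msub: "M \<subseteq> gsccs d \<sigma> W" using M by (simp add: max_cantichain_def cantichain_def)
  have Lsub: "set L \<subseteq> gsccs d \<sigma> W" using L by (simp add: valid_L_def shortest_cpath_def cpath_def)
  define c1 where "c1 = (has_dicycle d \<sigma> W \<and> int (length C) \<ge> 2 * int (card M) - 1 \<and> length C \<ge> length L)"
  define c2 where "c2 = (2 * int (card M) - 1 \<ge> int (length L))"
  define I where "I = (if c1 then {C ! i | i. i < length C \<and> even i}
      else if c2 then f ` M else f ` {L ! i | i. i < length L \<and> even i})"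
  have Icond: "(if c1 then I = {C ! i | i. i < length C \<and> even i}
      else if c2 then (\<exists>f. (\<forall>X\<in>M. f X \<in> X) \<and> I = f ` M)
      else (\<exists>f. (\<forall>X\<in>set L. f X \<in> X) \<and> I = f ` {L ! i | i. i < length L \<and> even i}))"
    unfolding I_def using fX Msub Lsub by auto
  have "{C ! i | i. i < length C \<and> even i} \<subseteq> set C" by auto
  moreover have "{L ! i | i. i < length L \<and> even i} \<subseteq> set L" by auto
  moreover have "finite M" using Msub finite_gsccs[OF fin] finite_subset by blast
  ultimately have finI: "finite I" unfolding I_def by (auto intro: finite_subset)
  show ?thesis
  proof (cases "k \<le> card I")
    case True
    then obtain g where "greedy d I k g" using greedy_exists[OF finI] by blast
    then have "extract_result d W \<sigma> k (Some (set g))" unfolding extract_result_def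
      using C M L Icond True unfolding c1_def c2_def
      by (intro exI[of _ C] exI[of _ M] exI[of _ L] exI[of _ I]) auto
    then show ?thesis by blast
  next
    case False
    then have "extract_result d W \<sigma> k None" unfolding extract_result_def
      using C M L Icond unfolding c1_def c2_def
      by (intro exI[of _ C] exI[of _ M] exI[of _ L] exI[of _ I]) auto
    then show ?thesis by blast
  qed
qed



lemma noarc_ge: "x \<in> W \<Longrightarrow> y \<in> W \<Longrightarrow> x \<noteq> y \<Longrightarrow> \<not> garc d \<sigma> W x y \<Longrightarrow> \<sigma> \<le> d x y"
  by (auto simp: garc_def)

lemma dmin_le: "dmin d x y \<le> d x y"
  by (simp add: dmin_def)

lemma C_pairs:
  assumes ch: "chordless_dicycle d \<sigma> W C" and ij: "i < length C" "j < length C" "even i" "even j" "i \<noteq> j"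
    and ex1: "\<not> (i = 0 \<and> j = length C - 1)" and ex2: "\<not> (j = 0 \<and> i = length C - 1)"
  shows "\<not> garc d \<sigma> W (C ! i) (C ! j)"
proof -
  have a: "j \<noteq> (i + 1) mod length C"
  proof (cases "i + 1 < length C")
    case True
    then have "(i + 1) mod length C = i + 1" by simp
    moreover have "j \<noteq> i + 1" using ij(3,4) by auto
    ultimately show ?thesis by simp
  next
    case False
    then have "i + 1 = length C" using ij by simp
    then have "(i + 1) mod length C = 0" by simp
    moreover have "j \<noteq> 0" using ex2 \<open>i + 1 = length C\<close> by auto
    ultimately show ?thesis by simp
  qed
  have b: "i \<noteq> (j + 1) mod length C"
  proof (cases "j + 1 < length C")
    case True
    then have "(j + 1) mod length C = j + 1" by simp
    moreover have "i \<noteq> j + 1" using ij(3,4) by auto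
    ultimately show ?thesis by simp
  next
    case False
    then have "j + 1 = length C" using ij by simp
    then have "(j + 1) mod length C = 0" by simp
    moreover have "i \<noteq> 0" using ex1 \<open>j + 1 = length C\<close> by auto
    ultimately show ?thesis by simp
  qed
  have "\<forall>i < length C. \<forall>j < length C.
        j \<noteq> i \<and> j \<noteq> (i + 1) mod length C \<and> i \<noteq> (j + 1) mod length C
        \<longrightarrow> \<not> garc d \<sigma> W (C ! i) (C ! j)" using ch unfolding chordless_dicycle_def by (elim conjE)
  then show ?thesis using ij(1,2,5) a b by simp
qed

lemma M_pairs:
  assumes "cantichain d \<sigma> W M" "X \<in> M" "Y \<in> M" "x \<in> X" "y \<in> Y" "X \<noteq> Y"
  shows "\<not> garc d \<sigma> W x y"
proof
  assume "garc d \<sigma> W x y"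
  then have "greach d \<sigma> W x y" by (rule garc_greach)
  then have "creach d \<sigma> W X Y" unfolding creach_def using assms(4,5) by blast
  moreover have "\<not> creach d \<sigma> W X Y" using assms(1,2,3,6) unfolding cantichain_def by blast
  ultimately show False by simp
qed

lemma L_pairs:
  assumes sp: "shortest_cpath d \<sigma> W L" and ij: "i < j" "j < length L" "even i" "even j"
    and x: "x \<in> L ! i" and y: "y \<in> L ! j"
  shows "\<not> garc d \<sigma> W x y \<and> \<not> garc d \<sigma> W y x"
proof -
  have cp: "cpath d \<sigma> W L" using sp by (simp add: shortest_cpath_def)
  have ij2: "Suc i < j" using ij by (metis Suc_lessI even_Suc)
  have neq: "L ! i \<noteq> L ! j" using cp ij by (simp add: cpath_def nth_eq_iff_index_eq)
  have Li: "L ! i \<in> gsccs d \<sigma> W" "L ! j \<in> gsccs d \<sigma> W" using cp ij by (auto simp: cpath_def)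
  have 1: "\<not> garc d \<sigma> W x y"
  proof
    assume "garc d \<sigma> W x y"
    then have "carc d \<sigma> W (L ! i) (L ! j)" using x y neq by (auto simp: carc_def)
    then show False using shortest_no_skip[OF sp ij2 ij(2)] by simp
  qed
  have 2: "\<not> garc d \<sigma> W y x"
  proof
    assume "garc d \<sigma> W y x"
    then have yx: "greach d \<sigma> W y x" by (rule garc_greach)
    have xy: "greach d \<sigma> W x y" using cpath_reach[OF cp _ ij(2) x y] ij by simp
    have "y \<in> W" using y Li gsccs_sub by blast
    then have "y \<in> gscc d \<sigma> W x" using xy yx by (simp add: gscc_def)
    then have "y \<in> L ! i" using gsccs_eq[OF Li(1) x] by simp
    then have "L ! i = L ! j" using gsccs_disj[OF Li _ y] by simp
    then show False using neq by simp
  qed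
  show ?thesis using 1 2 by simp
qed

lemma C_card:
  assumes ch: "chordless_dicycle d \<sigma> W C" and len: "2 * k + 1 \<le> length C"
  shows "k + 1 \<le> card {C ! i | i. i < length C \<and> even i}"
proof -
  have dist: "distinct C" using ch by (simp add: chordless_dicycle_def dicycle_def)
  have "C ! (2 * t) \<in> {C ! i | i. i < length C \<and> even i}" if "t \<le> k" for t
    using that len by (intro CollectI exI[of _ "2 * t"]) auto
  then have sub: "(\<lambda>t. C ! (2 * t)) ` {..k} \<subseteq> {C ! i | i. i < length C \<and> even i}"
    by auto
  have inj: "inj_on (\<lambda>t. C ! (2 * t)) {..k}"
    using dist len unfolding inj_on_def by (auto simp: nth_eq_iff_index_eq)
  have fin: "finite {C ! i | i. i < length C \<and> even i}"
    by (rule finite_subset[of _ "set C"]) auto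
  have "card ((\<lambda>t. C ! (2 * t)) ` {..k}) = k + 1" using inj by (simp add: card_image)
  then show ?thesis using card_mono[OF fin sub] by simp
qed

lemma L_card:
  assumes cp: "cpath d \<sigma> W L" and len: "length L = 2 * k" and f: "\<forall>X\<in>set L. f X \<in> X"
  shows "k \<le> card (f ` {L ! i | i. i < length L \<and> even i})"
proof -
  have dist: "distinct L" and Ls: "set L \<subseteq> gsccs d \<sigma> W" using cp by (auto simp: cpath_def)
  have mem: "L ! (2 * t) \<in> {L ! i | i. i < length L \<and> even i}" if "t < k" for t
    using that len by (intro CollectI exI[of _ "2 * t"]) auto
  have sub: "(\<lambda>t. f (L ! (2 * t))) ` {..<k} \<subseteq> f ` {L ! i | i. i < length L \<and> even i}"
  proof (rule image_subsetI)
    fix t assume "t \<in> {..<k}"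
    then show "f (L ! (2 * t)) \<in> f ` {L ! i | i. i < length L \<and> even i}"
      using mem[of t] by (intro imageI) simp
  qed
  have inj: "inj_on (\<lambda>t. f (L ! (2 * t))) {..<k}"
  proof
    fix s t assume st: "s \<in> {..<k}" "t \<in> {..<k}" "f (L ! (2 * s)) = f (L ! (2 * t))"
    have m: "L ! (2 * s) \<in> set L" "L ! (2 * t) \<in> set L" using st len by auto
    have g: "L ! (2 * s) \<in> gsccs d \<sigma> W" "L ! (2 * t) \<in> gsccs d \<sigma> W" using m Ls by auto
    have e: "f (L ! (2 * s)) \<in> L ! (2 * s)" "f (L ! (2 * t)) \<in> L ! (2 * t)" using f m by auto
    have "L ! (2 * s) = L ! (2 * t)" using gsccs_disj[OF g e(1)] e(2) st(3) by simp
    then show "s = t" using dist st len by (simp add: nth_eq_iff_index_eq)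
  qed
  have fin: "finite (f ` {L ! i | i. i < length L \<and> even i})"
    by (rule finite_imageI, rule finite_subset[of _ "set L"]) auto
  have "card ((\<lambda>t. f (L ! (2 * t))) ` {..<k}) = k" using inj by (simp add: card_image)
  then show ?thesis using card_mono[OF fin sub] by simp
qed

lemma M_card:
  assumes ca: "cantichain d \<sigma> W M" and f: "\<forall>X\<in>M. f X \<in> X"
  shows "card (f ` M) = card M"
proof -
  have "inj_on f M"
  proof
    fix X Y assume XY: "X \<in> M" "Y \<in> M" "f X = f Y"
    show "X = Y"
    proof (rule ccontr)
      assume "X \<noteq> Y"
      then have "\<not> creach d \<sigma> W X Y" using ca XY unfolding cantichain_def by blast
      moreover have "f X \<in> X" "f X \<in> Y" using f XY by auto
      moreover have "creach d \<sigma> W X Y" unfolding creach_def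
        by (rule bexI[of _ "f X"], rule bexI[of _ "f X"], rule greach_refl) (use \<open>f X \<in> X\<close> \<open>f X \<in> Y\<close> in auto)
      ultimately show False by simp
    qed
  qed
  then show ?thesis by (rule card_image)
qed



lemma extract_good:
  assumes pm: "asym_pseudometric U d" and WU: "W \<subseteq> U" and sig: "\<sigma> > 0" and k: "1 \<le> k"
    and sep: "\<forall>x\<in>W. \<forall>y\<in>W. x \<noteq> y \<longrightarrow> dmax d x y \<ge> 2 * real k * \<sigma>"
    and ex: "extract_result d W \<sigma> k (Some S)"
  shows "S \<subseteq> W \<and> card S = k \<and> (\<forall>x\<in>S. \<forall>y\<in>S. x \<noteq> y \<longrightarrow> \<sigma> \<le> d x y)"
proof -
  obtain C M L I where C: "has_dicycle d \<sigma> W \<longrightarrow> chordless_dicycle d \<sigma> W C"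
    and M: "max_cantichain d \<sigma> W M" and L: "valid_L d \<sigma> W k L"
    and Icond: "if has_dicycle d \<sigma> W \<and> int (length C) \<ge> 2 * int (card M) - 1 \<and> length C \<ge> length L
      then I = {C ! i | i. i < length C \<and> even i}
      else if 2 * int (card M) - 1 \<ge> int (length L)
      then (\<exists>f. (\<forall>X\<in>M. f X \<in> X) \<and> I = f ` M)
      else (\<exists>f. (\<forall>X\<in>set L. f X \<in> X) \<and> I = f ` {L ! i | i. i < length L \<and> even i})"
    and res: "if k \<le> card I then (\<exists>g. greedy d I k g \<and> Some S = Some (set g)) else Some S = None"
    using ex unfolding extract_result_def by blast
  have kI: "k \<le> card I" using res by (cases "k \<le> card I") auto
  then obtain g where g: "greedy d I k g" "S = set g" using res by auto
  note gb = greedy_basic[OF g(1)]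
  have cardS: "card S = k" using gb g by simp
  have SI: "S \<subseteq> I" using gb g by simp
  have ca: "cantichain d \<sigma> W M" using M by (simp add: max_cantichain_def)
  have sp: "shortest_cpath d \<sigma> W L" using L by (simp add: valid_L_def)
  have cpL: "cpath d \<sigma> W L" using sp by (simp add: shortest_cpath_def)
  show ?thesis
  proof (cases "has_dicycle d \<sigma> W \<and> int (length C) \<ge> 2 * int (card M) - 1 \<and> length C \<ge> length L")
    case True
    then have I: "I = {C ! i | i. i < length C \<and> even i}" using Icond by simp
    have ch: "chordless_dicycle d \<sigma> W C" using C True by simp
    have cyc: "dicycle d \<sigma> W C" using ch by (simp add: chordless_dicycle_def)
    have len: "2 * k + 1 \<le> length C" using cycle_length[OF pm WU sig k sep cyc] .
    have setC: "set C \<subseteq> W" using cyc by (simp add: dicycle_def)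
    have IW: "I \<subseteq> W" using I setC by auto
    have finI: "finite I" unfolding I by (rule finite_subset[of _ "set C"]) auto
    have cI: "k + 1 \<le> card I" using C_card[OF ch len] I by simp
    have good: "\<forall>x\<in>I. \<forall>y\<in>I. x \<noteq> y \<and> {x, y} \<noteq> {C ! 0, C ! (length C - 1)} \<longrightarrow> \<sigma> \<le> dmin d x y"
    proof (intro ballI impI)
      fix x y assume xy: "x \<in> I" "y \<in> I" "x \<noteq> y \<and> {x, y} \<noteq> {C ! 0, C ! (length C - 1)}"
      obtain i where i: "x = C ! i" "i < length C" "even i" using xy(1) I by auto
      obtain j where j: "y = C ! j" "j < length C" "even j" using xy(2) I by auto
      have ij: "i \<noteq> j" using xy i j by auto
      have e1: "\<not> (i = 0 \<and> j = length C - 1)" using xy i j by auto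
      have e2: "\<not> (j = 0 \<and> i = length C - 1)" using xy i j by auto
      have n1: "\<not> garc d \<sigma> W x y" using C_pairs[OF ch i(2) j(2) i(3) j(3) ij e1 e2] i j by simp
      have n2: "\<not> garc d \<sigma> W y x" using C_pairs[OF ch j(2) i(2) j(3) i(3) ij[symmetric] e2 e1] i j by simp
      have xW: "x \<in> W" "y \<in> W" using xy IW by auto
      have "\<sigma> \<le> d x y" using noarc_ge[OF xW _ n1] xy by simp
      moreover have "\<sigma> \<le> d y x" using noarc_ge[OF xW(2,1) _ n2] xy by auto
      ultimately show "\<sigma> \<le> dmin d x y" by (simp add: dmin_def)
    qed
    have "\<forall>x\<in>set g. \<forall>y\<in>set g. x \<noteq> y \<longrightarrow> \<sigma> \<le> dmin d x y"
      using greedy_almost[OF g(1) finI _ good] cI by simp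
    then have "\<forall>x\<in>S. \<forall>y\<in>S. x \<noteq> y \<longrightarrow> \<sigma> \<le> d x y"
      unfolding g(2) using dmin_le[of d] by (meson order_trans)
    then show ?thesis using SI IW cardS by auto
  next
    case nc1: False
    show ?thesis
    proof (cases "2 * int (card M) - 1 \<ge> int (length L)")
      case True
      have "\<exists>f. (\<forall>X\<in>M. f X \<in> X) \<and> I = f ` M" using Icond nc1 True by (simp only: if_False if_True)
      then obtain f where f: "\<forall>X\<in>M. f X \<in> X" "I = f ` M" by blast
      have Msub: "M \<subseteq> gsccs d \<sigma> W" using ca by (simp add: cantichain_def)
      have IW: "I \<subseteq> W"
      proof
        fix x assume "x \<in> I"
        then obtain X where X: "X \<in> M" "x = f X" using f by auto
        then have "X \<subseteq> W" using Msub gsccs_sub[of X d \<sigma> W] by auto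
        then show "x \<in> W" using X f by auto
      qed
      have good: "\<sigma> \<le> d x y" if xy: "x \<in> I" "y \<in> I" "x \<noteq> y" for x y
      proof -
        obtain X where X: "X \<in> M" "x = f X" using xy f by auto
        obtain Y where Y: "Y \<in> M" "y = f Y" using xy f by auto
        have "X \<noteq> Y" using X Y xy by auto
        then have "\<not> garc d \<sigma> W x y" using M_pairs[OF ca X(1) Y(1)] f X Y by simp
        moreover have "x \<in> W" "y \<in> W" using xy IW by auto
        ultimately show ?thesis using noarc_ge[of x W y d \<sigma>] xy by simp
      qed
      show ?thesis using SI IW cardS good by (meson subsetD subset_trans)
    next
      case False
      have "\<exists>f. (\<forall>X\<in>set L. f X \<in> X) \<and> I = f ` {L ! i | i. i < length L \<and> even i}"
        using Icond nc1 False by (simp only: if_False if_True)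
      then obtain f where f: "\<forall>X\<in>set L. f X \<in> X" "I = f ` {L ! i | i. i < length L \<and> even i}"
        by blast
      have Lsub: "set L \<subseteq> gsccs d \<sigma> W" using cpL by (simp add: cpath_def)
      have IW: "I \<subseteq> W"
      proof
        fix x assume "x \<in> I"
        then obtain i where i: "x = f (L ! i)" "i < length L" using f by auto
        then have "L ! i \<in> gsccs d \<sigma> W" using Lsub by auto
        then have "L ! i \<subseteq> W" using gsccs_sub[of "L ! i" d \<sigma> W] by simp
        moreover have "f (L ! i) \<in> L ! i" using f i by simp
        ultimately show "x \<in> W" using i by auto
      qed
      have lem: "\<not> garc d \<sigma> W (f (L ! i)) (f (L ! j)) \<and> \<not> garc d \<sigma> W (f (L ! j)) (f (L ! i))"
        if "i < j" "j < length L" "even i" "even j" for i j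
        using L_pairs[OF sp that] f that by simp
      have good: "\<sigma> \<le> d x y" if xy: "x \<in> I" "y \<in> I" "x \<noteq> y" for x y
      proof -
        obtain i where i: "x = f (L ! i)" "i < length L" "even i" using xy f by auto
        obtain j where j: "y = f (L ! j)" "j < length L" "even j" using xy f by auto
        have "\<not> garc d \<sigma> W x y"
        proof (cases i j rule: linorder_cases)
          case less then show ?thesis using lem[of i j] i j by simp
        next
          case equal then show ?thesis using xy i j by simp
        next
          case greater then show ?thesis using lem[of j i] i j by simp
        qed
        moreover have "x \<in> W" "y \<in> W" using xy IW by auto
        ultimately show ?thesis using noarc_ge[of x W y d \<sigma>] xy by simp
      qed
      show ?thesis using SI IW cardS good by (meson subsetD subset_trans)
    qed
  qed
qed



lemma L_le_2k:
  assumes L: "valid_L d \<sigma> W k L" and k: "1 \<le> k"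
  shows "length L \<le> 2 * k"
proof (rule ccontr)
  assume "\<not> ?thesis"
  then have gt: "2 * k < length L" by simp
  have sp: "shortest_cpath d \<sigma> W L" using L by (simp add: valid_L_def)
  have "shortest_cpath d \<sigma> W (take (2 * k) L)" using shortest_prefix[OF sp] gt k by simp
  moreover have "length (take (2 * k) L) = 2 * k" using gt by simp
  ultimately have "\<exists>Q. shortest_cpath d \<sigma> W Q \<and> length Q = 2 * k" by blast
  then have "length L = 2 * k" using L unfolding valid_L_def by blast
  then show False using gt by simp
qed

lemma extract_some:
  assumes pm: "asym_pseudometric U d" and WU: "W \<subseteq> U" and sig: "\<sigma> > 0" and k: "1 \<le> k"
    and sep: "\<forall>x\<in>W. \<forall>y\<in>W. x \<noteq> y \<longrightarrow> dmax d x y \<ge> 2 * real k * \<sigma>"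
    and H: "\<not> has_dicycle d \<sigma> W \<Longrightarrow>
       (\<exists>A. cantichain d \<sigma> W A \<and> k \<le> card A) \<or> (\<exists>P. shortest_cpath d \<sigma> W P \<and> length P = 2 * k)"
    and ex: "extract_result d W \<sigma> k res"
  shows "res \<noteq> None"
proof -
  obtain C M L I where C: "has_dicycle d \<sigma> W \<longrightarrow> chordless_dicycle d \<sigma> W C"
    and M: "max_cantichain d \<sigma> W M" and L: "valid_L d \<sigma> W k L"
    and Icond: "if has_dicycle d \<sigma> W \<and> int (length C) \<ge> 2 * int (card M) - 1 \<and> length C \<ge> length L
      then I = {C ! i | i. i < length C \<and> even i}
      else if 2 * int (card M) - 1 \<ge> int (length L)
      then (\<exists>f. (\<forall>X\<in>M. f X \<in> X) \<and> I = f ` M)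
      else (\<exists>f. (\<forall>X\<in>set L. f X \<in> X) \<and> I = f ` {L ! i | i. i < length L \<and> even i})"
    and res: "if k \<le> card I then (\<exists>g. greedy d I k g \<and> res = Some (set g)) else res = None"
    using ex unfolding extract_result_def by blast
  have ca: "cantichain d \<sigma> W M" and Mmax: "\<And>A. cantichain d \<sigma> W A \<Longrightarrow> card A \<le> card M"
    using M unfolding max_cantichain_def by auto
  have sp: "shortest_cpath d \<sigma> W L" using L by (simp add: valid_L_def)
  have cpL: "cpath d \<sigma> W L" using sp by (simp add: shortest_cpath_def)
  have Lle: "length L \<le> 2 * k" using L_le_2k[OF L k] .
  have Lcase: "length L = 2 * k \<or> (\<nexists>Q. shortest_cpath d \<sigma> W Q \<and> length Q = 2 * k)"
    using L unfolding valid_L_def by blast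
  have clen: "has_dicycle d \<sigma> W \<Longrightarrow> 2 * k + 1 \<le> length C"
  proof -
    assume h: "has_dicycle d \<sigma> W"
    then have "dicycle d \<sigma> W C" using C by (simp add: chordless_dicycle_def)
    then show ?thesis using cycle_length[OF pm WU sig k sep] by blast
  qed
  have H': "\<not> has_dicycle d \<sigma> W \<Longrightarrow> k \<le> card M \<or> length L = 2 * k"
  proof -
    assume "\<not> has_dicycle d \<sigma> W"
    then consider "\<exists>A. cantichain d \<sigma> W A \<and> k \<le> card A" | "\<exists>P. shortest_cpath d \<sigma> W P \<and> length P = 2 * k"
      using H by blast
    then show ?thesis
    proof cases
      case 1 then show ?thesis using Mmax by (meson le_trans)
    next
      case 2 then show ?thesis using Lcase by blast
    qed
  qed
  have "k \<le> card I"
  proof (cases "has_dicycle d \<sigma> W \<and> int (length C) \<ge> 2 * int (card M) - 1 \<and> length C \<ge> length L")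
    case True
    then have I: "I = {C ! i | i. i < length C \<and> even i}" using Icond by simp
    have ch: "chordless_dicycle d \<sigma> W C" using C True by simp
    show ?thesis using C_card[OF ch clen] True I by simp
  next
    case nc1: False
    show ?thesis
    proof (cases "2 * int (card M) - 1 \<ge> int (length L)")
      case True
      have "\<exists>f. (\<forall>X\<in>M. f X \<in> X) \<and> I = f ` M" using Icond nc1 True by (simp only: if_False if_True)
      then obtain f where f: "\<forall>X\<in>M. f X \<in> X" "I = f ` M" by blast
      have cI: "card I = card M" using M_card[OF ca f(1)] f(2) by simp
      have "k \<le> card M"
      proof (cases "has_dicycle d \<sigma> W")
        case True
        have "2 * k + 1 \<le> length C" using clen True .
        then show ?thesis using nc1 True \<open>2 * int (card M) - 1 \<ge> int (length L)\<close> by linarith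
      next
        case False
        then consider "k \<le> card M" | "length L = 2 * k" using H' by blast
        then show ?thesis
        proof cases
          case 1 then show ?thesis .
        next
          case 2 then show ?thesis using \<open>2 * int (card M) - 1 \<ge> int (length L)\<close> by linarith
        qed
      qed
      then show ?thesis using cI by simp
    next
      case nc2: False
      have "\<exists>f. (\<forall>X\<in>set L. f X \<in> X) \<and> I = f ` {L ! i | i. i < length L \<and> even i}"
        using Icond nc1 nc2 by (simp only: if_False if_True)
      then obtain f where f: "\<forall>X\<in>set L. f X \<in> X" "I = f ` {L ! i | i. i < length L \<and> even i}"
        by blast
      have "length L = 2 * k"
      proof (rule ccontr)
        assume ne: "length L \<noteq> 2 * k"
        then have nQ: "\<nexists>Q. shortest_cpath d \<sigma> W Q \<and> length Q = 2 * k" using Lcase by blast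
        show False
        proof (cases "has_dicycle d \<sigma> W")
          case True
          have "2 * k + 1 \<le> length C" using clen True .
          then show False using nc1 nc2 True Lle by linarith
        next
          case False
          then consider "k \<le> card M" | "length L = 2 * k" using H' by blast
          then show False
          proof cases
            case 1 then show False using nc2 Lle ne by linarith
          next
            case 2 then show False using ne by simp
          qed
        qed
      qed
      then show ?thesis using L_card[OF cpL _ f(1)] f(2) by simp
    qed
  qed
  then show ?thesis using res by auto
qed



lemma dmax_sym: "dmax d x y = dmax d y x"
  by (simp add: dmax_def max.commute)

lemma cluster_exists:
  assumes "finite Unm" "Unm \<subseteq> U" "\<forall>u\<in>U. d u u = 0" "R > 0"
  shows "\<exists>F. cluster_run d R Unm Out F"
  using assms(1,2)
proof (induction "card Unm" arbitrary: Unm Out rule: less_induct)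
  case less
  show ?case
  proof (cases "Unm = {}")
    case True
    then show ?thesis using cluster_run.stop by blast
  next
    case False
    then obtain c where c: "c \<in> Unm" by auto
    define Unm' where "Unm' = Unm - {v \<in> Unm. dmax d c v < R}"
    have "dmax d c c < R" using assms(3,4) c less.prems by (auto simp: dmax_def)
    then have "c \<notin> Unm'" by (simp add: Unm'_def)
    then have "Unm' \<subset> Unm" using c by (auto simp: Unm'_def)
    then have "card Unm' < card Unm" using less.prems by (simp add: psubset_card_mono)
    moreover have "finite Unm'" "Unm' \<subseteq> U" using less.prems by (auto simp: Unm'_def)
    ultimately obtain F where "cluster_run d R Unm' (insert c Out) F" using less.hyps by blast
    then have "cluster_run d R Unm Out F" using cluster_run.step[OF c] unfolding Unm'_def by blast
    then show ?thesis by blast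
  qed
qed

lemma cluster_props:
  assumes "cluster_run d R Unm Out F"
  shows "(\<forall>z\<in>Out. \<forall>u\<in>Unm. dmax d z u \<ge> R) \<Longrightarrow> (\<forall>x\<in>Out. \<forall>y\<in>Out. x \<noteq> y \<longrightarrow> dmax d x y \<ge> R) \<Longrightarrow>
    F \<subseteq> Out \<union> Unm \<and> Out \<subseteq> F \<and> (\<forall>x\<in>F. \<forall>y\<in>F. x \<noteq> y \<longrightarrow> dmax d x y \<ge> R) \<and>
    (\<forall>u\<in>Unm. \<exists>c\<in>F. dmax d c u < R)"
  using assms
proof (induction rule: cluster_run.induct)
  case (stop Out)
  then show ?case by simp
next
  case (step c Unm Out F)
  define Unm' where "Unm' = Unm - {v \<in> Unm. dmax d c v < R}"
  have p1: "\<forall>z\<in>insert c Out. \<forall>u\<in>Unm'. dmax d z u \<ge> R"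
    using step.prems(1) unfolding Unm'_def by auto
  have p2: "\<forall>x\<in>insert c Out. \<forall>y\<in>insert c Out. x \<noteq> y \<longrightarrow> dmax d x y \<ge> R"
    using step.prems step.hyps(1) dmax_sym[of d] by (metis insert_iff)
  have IH: "F \<subseteq> insert c Out \<union> Unm' \<and> insert c Out \<subseteq> F \<and> (\<forall>x\<in>F. \<forall>y\<in>F. x \<noteq> y \<longrightarrow> dmax d x y \<ge> R) \<and>
    (\<forall>u\<in>Unm'. \<exists>c\<in>F. dmax d c u < R)" using step.IH[OF p1[unfolded Unm'_def] p2] unfolding Unm'_def .
  have "\<forall>u\<in>Unm. \<exists>c'\<in>F. dmax d c' u < R"
  proof
    fix u assume u: "u \<in> Unm"
    show "\<exists>c'\<in>F. dmax d c' u < R"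
    proof (cases "dmax d c u < R")
      case True then show ?thesis using IH by blast
    next
      case False then have "u \<in> Unm'" using u by (simp add: Unm'_def)
      then show ?thesis using IH by blast
    qed
  qed
  moreover have "F \<subseteq> Out \<union> Unm" using IH step.hyps(1) unfolding Unm'_def by blast
  ultimately show ?case using IH by blast
qed

lemma cluster_result_props:
  assumes "cluster_result d U R W"
  shows "W \<subseteq> U" "\<forall>x\<in>W. \<forall>y\<in>W. x \<noteq> y \<longrightarrow> dmax d x y \<ge> R" "\<forall>u\<in>U. \<exists>c\<in>W. dmax d c u < R"
  using cluster_props[OF assms[unfolded cluster_result_def]] by auto

lemma walk_in_W:
  "walk (garc d \<sigma> W) xs \<Longrightarrow> hd xs \<in> W \<Longrightarrow> set xs \<subseteq> W"
proof (induction xs)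
  case Nil then show ?case by simp
next
  case (Cons a xs)
  show ?case
  proof (cases xs)
    case Nil then show ?thesis using Cons by simp
  next
    case (Cons b ys)
    have "garc d \<sigma> W a b" "successively (garc d \<sigma> W) xs" using Cons \<open>walk _ (a # xs)\<close> by (auto simp: walk_def)
    then have "walk (garc d \<sigma> W) xs" "hd xs \<in> W" using Cons by (auto simp: walk_def garc_def)
    then show ?thesis using Cons.IH \<open>hd (a # xs) \<in> W\<close> by simp
  qed
qed

lemma diver_ge:
  assumes "finite S" "2 \<le> card S" "\<forall>x\<in>S. \<forall>y\<in>S. x \<noteq> y \<longrightarrow> c \<le> d x y"
  shows "c \<le> diver d S"
proof -
  have fin: "finite {d u v | u v. u \<in> S \<and> v \<in> S \<and> u \<noteq> v}"
  proof -
    have "{d u v | u v. u \<in> S \<and> v \<in> S \<and> u \<noteq> v} \<subseteq> (\<lambda>(u, v). d u v) ` (S \<times> S)" by auto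
    then show ?thesis using assms(1) finite_subset by blast
  qed
  obtain u v where "u \<in> S" "v \<in> S" "u \<noteq> v"
  proof -
    have "\<not> (\<forall>x\<in>S. \<forall>y\<in>S. x = y)" using card_le_Suc0_iff_eq[OF assms(1)] assms(2) by auto
    then show ?thesis using that by blast
  qed
  then have ne: "{d u v | u v. u \<in> S \<and> v \<in> S \<and> u \<noteq> v} \<noteq> {}" by blast
  show ?thesis unfolding diver_def using fin ne assms(3) by (subst Min_ge_iff) auto
qed



lemma centers_sep:
  assumes pm: "asym_pseudometric U d" and WU: "W \<subseteq> U"
    and OU: "Opt \<subseteq> U" and Rs: "Rs > 0" and Osep: "\<forall>u\<in>Opt. \<forall>v\<in>Opt. u \<noteq> v \<longrightarrow> Rs \<le> d u v"
    and key1: "\<forall>x\<in>U. \<forall>y\<in>U. x \<noteq> y \<longrightarrow> d x y < R0 \<longrightarrow> d x y < Rs / 3"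
    and key2: "\<forall>x\<in>U. \<forall>y\<in>U. x \<noteq> y \<longrightarrow> d x y \<ge> Rs / 3 \<longrightarrow> d x y \<ge> R0"
    and cf: "\<forall>o'\<in>Opt. cf o' \<in> W \<and> dmax d (cf o') o' < R0"
    and o12: "o1 \<in> Opt" "o2 \<in> Opt" "o1 \<noteq> o2"
  shows "cf o1 \<noteq> cf o2 \<and> d (cf o1) (cf o2) \<ge> R0"
proof -
  note P = pm_facts[OF pm]
  define c1 where "c1 = cf o1"
  define c2 where "c2 = cf o2"
  have inU: "o1 \<in> U" "o2 \<in> U" "c1 \<in> U" "c2 \<in> U" using o12 OU cf WU unfolding c1_def c2_def by auto
  have near: "d z (cf z) < Rs / 3 \<and> d (cf z) z < Rs / 3" if "z \<in> Opt" for z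
  proof -
    have zU: "z \<in> U" "cf z \<in> U" using that OU cf WU by auto
    have dm: "d z (cf z) < R0" "d (cf z) z < R0" using cf that by (auto simp: dmax_def)
    show ?thesis
    proof (cases "z = cf z")
      case True
      then have "d z (cf z) = 0" "d (cf z) z = 0" using P(2) zU by auto
      then show ?thesis using Rs by simp
    next
      case False
      then show ?thesis using key1 zU dm by auto
    qed
  qed
  have "d o1 o2 \<le> d o1 c1 + d c1 o2" using P(4) inU by blast
  also have "d c1 o2 \<le> d c1 c2 + d c2 o2" using P(4) inU by blast
  finally have "Rs \<le> d o1 c1 + d c1 c2 + d c2 o2" using Osep o12 by force
  moreover have "d o1 c1 < Rs / 3" "d c2 o2 < Rs / 3" using near o12 unfolding c1_def c2_def by auto
  ultimately have gt: "d c1 c2 > Rs / 3" by linarith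
  then have ne: "c1 \<noteq> c2" using P(2) inU Rs by force
  then have "d c1 c2 \<ge> R0" using key2 inU gt by auto
  then show ?thesis using ne unfolding c1_def c2_def by simp
qed

lemma dag_H:
  assumes pm: "asym_pseudometric U d" and WU: "W \<subseteq> U" and k: "2 \<le> k"
    and R0: "R0 > 0"
    and cover: "\<forall>u\<in>U. \<exists>c\<in>W. dmax d c u < R0"
    and OU: "Opt \<subseteq> U" and cO: "card Opt = k" and Rs: "Rs > 0"
    and Osep: "\<forall>u\<in>Opt. \<forall>v\<in>Opt. u \<noteq> v \<longrightarrow> Rs \<le> d u v"
    and key1: "\<forall>x\<in>U. \<forall>y\<in>U. x \<noteq> y \<longrightarrow> d x y < R0 \<longrightarrow> d x y < Rs / 3"
    and key2: "\<forall>x\<in>U. \<forall>y\<in>U. x \<noteq> y \<longrightarrow> d x y \<ge> Rs / 3 \<longrightarrow> d x y \<ge> R0"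
    and sig: "\<sigma> = R0 / (2 * real k)"
    and dag: "\<not> has_dicycle d \<sigma> W"
  shows "(\<exists>A. cantichain d \<sigma> W A \<and> k \<le> card A) \<or> (\<exists>P. shortest_cpath d \<sigma> W P \<and> length P = 2 * k)"
proof -
  note P = pm_facts[OF pm]
  have "\<forall>o'. \<exists>c. o' \<in> Opt \<longrightarrow> c \<in> W \<and> dmax d c o' < R0" using cover OU by blast
  then obtain cf where cf0: "\<forall>o'. o' \<in> Opt \<longrightarrow> cf o' \<in> W \<and> dmax d (cf o') o' < R0" by metis
  then have cf: "\<forall>o'\<in>Opt. cf o' \<in> W \<and> dmax d (cf o') o' < R0" by blast
  note cs = centers_sep[OF pm WU OU Rs Osep key1 key2 cf]
  define CO where "CO = cf ` Opt"
  have inj: "inj_on cf Opt" using cs unfolding inj_on_def by blast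
  have cCO: "card CO = k" using inj cO unfolding CO_def by (simp add: card_image)
  have COW: "CO \<subseteq> W" using cf unfolding CO_def by auto
  have COsep: "\<forall>x\<in>CO. \<forall>y\<in>CO. x \<noteq> y \<longrightarrow> d x y \<ge> R0" using cs unfolding CO_def by blast
  show ?thesis
  proof (cases "\<forall>x\<in>CO. \<forall>y\<in>CO. x \<noteq> y \<longrightarrow> \<not> greach d \<sigma> W x y")
    case True
    define A where "A = gscc d \<sigma> W ` CO"
    have injg: "inj_on (gscc d \<sigma> W) CO"
    proof
      fix x y assume xy: "x \<in> CO" "y \<in> CO" "gscc d \<sigma> W x = gscc d \<sigma> W y"
      then have "y \<in> gscc d \<sigma> W x" using gscc_self[of y W d \<sigma>] COW by auto
      then have "greach d \<sigma> W x y" by (simp add: gscc_def)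
      then show "x = y" using True xy by blast
    qed
    have "cantichain d \<sigma> W A"
      unfolding cantichain_def
    proof (intro conjI ballI impI)
      show "A \<subseteq> gsccs d \<sigma> W" using COW unfolding A_def gsccs_def by auto
      fix X Y assume XY: "X \<in> A" "Y \<in> A" "X \<noteq> Y"
      then obtain x y where xy: "x \<in> CO" "y \<in> CO" "X = gscc d \<sigma> W x" "Y = gscc d \<sigma> W y"
        unfolding A_def by auto
      then have "x \<noteq> y" using XY by auto
      show "\<not> creach d \<sigma> W X Y"
      proof
        assume "creach d \<sigma> W X Y"
        then obtain a b where ab: "a \<in> X" "b \<in> Y" "greach d \<sigma> W a b" unfolding creach_def by blast
        have "greach d \<sigma> W x a" "greach d \<sigma> W b y" using ab xy by (auto simp: gscc_def)
        then have "greach d \<sigma> W x y" using ab(3) greach_trans by metis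
        then show False using True xy \<open>x \<noteq> y\<close> by blast
      qed
    qed
    moreover have "card A = k" using injg cCO unfolding A_def by (simp add: card_image)
    ultimately show ?thesis by auto
  next
    case False
    then obtain c1 c2 where c12: "c1 \<in> CO" "c2 \<in> CO" "c1 \<noteq> c2" "greach d \<sigma> W c1 c2" by blast
    have c12W: "c1 \<in> W" "c2 \<in> W" using c12 COW by auto
    obtain xs0 where "walk (garc d \<sigma> W) xs0" "hd xs0 = c1" "last xs0 = c2"
      using rtrancl_walk[of c1 c2 "garc d \<sigma> W"] c12 unfolding greach_def by blast
    then obtain xs where xs: "walk (garc d \<sigma> W) xs" "distinct xs" "hd xs = c1" "last xs = c2"
      using walk_distinct[of "garc d \<sigma> W" xs0] by auto
    have xsW: "set xs \<subseteq> W" using walk_in_W xs c12W by metis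
    define P0 where "P0 = map (\<lambda>x. {x}) xs"
    have ne: "xs \<noteq> []" using xs by (simp add: walk_def)
    have "cpath d \<sigma> W P0" unfolding cpath_alt
    proof (intro conjI)
      have "successively (garc d \<sigma> W) xs" using xs by (simp add: walk_def)
      then have "successively (\<lambda>a b. carc d \<sigma> W {a} {b}) xs"
        by (rule successively_mono) (auto simp: carc_def garc_def)
      then show "walk (carc d \<sigma> W) P0" using ne unfolding P0_def walk_def by (simp add: successively_map)
      show "distinct P0" using xs unfolding P0_def by (simp add: distinct_map inj_on_def)
      show "set P0 \<subseteq> gsccs d \<sigma> W"
      proof
        fix X assume "X \<in> set P0"
        then obtain x where x: "x \<in> set xs" "X = {x}" unfolding P0_def by auto
        then have "x \<in> W" using xsW by auto
        then have "X = gscc d \<sigma> W x" using dag_gscc[OF dag] x by simp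
        then show "X \<in> gsccs d \<sigma> W" using \<open>x \<in> W\<close> by (simp add: gsccs_def)
      qed
    qed
    moreover have "hd P0 = {c1}" "last P0 = {c2}" using xs ne unfolding P0_def by (auto simp: hd_map last_map)
    ultimately have "\<exists>P. cpath d \<sigma> W P \<and> hd P = {c1} \<and> last P = {c2}" by blast
    then obtain P where Pp: "cpath d \<sigma> W P \<and> hd P = {c1} \<and> last P = {c2}"
      and Pmin: "\<And>Q. cpath d \<sigma> W Q \<and> hd Q = {c1} \<and> last Q = {c2} \<Longrightarrow> length P \<le> length Q"
      using ex_has_least_nat[of "\<lambda>P. cpath d \<sigma> W P \<and> hd P = {c1} \<and> last P = {c2}" _ length] by metis
    have sp: "shortest_cpath d \<sigma> W P" unfolding shortest_cpath_def using Pp Pmin by metis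
    have Pne: "P \<noteq> []" using Pp by (simp add: cpath_def)
    show ?thesis
    proof (cases "2 * k \<le> length P")
      case True
      have "shortest_cpath d \<sigma> W (take (2 * k) P)" using shortest_prefix[OF sp] True k by simp
      moreover have "length (take (2 * k) P) = 2 * k" using True by simp
      ultimately show ?thesis by blast
    next
      case False
      have a: "c1 \<in> P ! 0" using Pp Pne by (simp add: hd_conv_nth)
      have b: "c2 \<in> P ! (length P - 1)" using Pp Pne by (simp add: last_conv_nth)
      have "d c1 c2 \<le> real (length P - 1) * \<sigma>"
        using dag_cpath_dist[OF pm WU dag _ a _ b] Pp Pne by simp
      moreover have "real (length P - 1) \<le> 2 * real k - 2"
      proof -
        have n: "length P - 1 + 2 \<le> 2 * k" using False k by presburger
        have "real (length P - 1 + 2) \<le> real (2 * k)" using n by (simp only: of_nat_le_iff)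
        then show ?thesis by simp
      qed
      moreover have "\<sigma> > 0" using sig R0 k by simp
      ultimately have "d c1 c2 \<le> (2 * real k - 2) * \<sigma>" by (meson order_trans mult_right_mono less_imp_le)
      also have "\<dots> < 2 * real k * \<sigma>" using \<open>\<sigma> > 0\<close> by simp
      also have "\<dots> = R0" using sig k by simp
      finally have "d c1 c2 < R0" .
      then show ?thesis using COsep c12 by force
    qed
  qed
qed



theorem theorem5p5:
  fixes U :: "'a set" and d :: "'a \<Rightarrow> 'a \<Rightarrow> real" and k n :: nat
  assumes "asym_pseudometric U d"
    and "card U = n"
    and "2 \<le> k" and "k \<le> n"
    and "opt_div U d k > 0"
  shows "(\<exists>Uc out. bac_run U d k Uc out) \<and>
    (\<forall>Uc out. bac_run U d k Uc out \<longrightarrow>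
       (\<exists>S. bac_returns U d out S) \<and>
       (\<forall>S. bac_returns U d out S \<longrightarrow>
          S \<subseteq> U \<and> card S = k \<and> diver d S \<ge> opt_div U d k / (6 * real k)))"
proof -
  note pm = assms(1)
  note P = pm_facts[OF pm]
  have finU: "finite U" by (rule P(1))
  have dz: "\<forall>u\<in>U. d u u = 0" using P(2) by blast
  have k1: "1 \<le> k" using assms(3) by simp
  have kpos: "real k > 0" using assms(3) by simp
  define Rs where "Rs = opt_div U d k"
  have Rs: "Rs > 0" using assms(5) by (simp add: Rs_def)
  define radii where "radii = bac_radii U d"
  have finR: "finite radii"
  proof -
    have "radii \<subseteq> (\<lambda>(i, j). d i j) ` (U \<times> U)" unfolding radii_def bac_radii_def by auto
    then show ?thesis using finU finite_subset by blast
  qed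
  have radpos: "\<And>r. r \<in> radii \<Longrightarrow> r > 0" unfolding radii_def bac_radii_def by auto
  have Une: "U \<noteq> {}" using assms(2,3,4) by auto
  have sepR: "\<forall>x\<in>W. \<forall>y\<in>W. x \<noteq> y \<longrightarrow> dmax d x y \<ge> 2 * real k * (R / (2 * real k))"
    if "\<forall>x\<in>W. \<forall>y\<in>W. x \<noteq> y \<longrightarrow> dmax d x y \<ge> R" for W R
    using that kpos by simp
  have ex1: "\<exists>Uc out. bac_run U d k Uc out"
  proof -
    have "\<forall>R. \<exists>p. R \<in> radii \<longrightarrow> cluster_result d U R (fst p) \<and> extract_result d (fst p) (R / (2 * real k)) k (snd p)"
    proof
      fix R
      show "\<exists>p. R \<in> radii \<longrightarrow> cluster_result d U R (fst p) \<and> extract_result d (fst p) (R / (2 * real k)) k (snd p)"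
      proof (cases "R \<in> radii")
        case True
        obtain W where W: "cluster_run d R U {} W" using cluster_exists[of U U d R "{}", OF finU subset_refl dz radpos[OF True]] by blast
        then have cr: "cluster_result d U R W" by (simp add: cluster_result_def)
        note cp = cluster_result_props[OF cr]
        have "W \<noteq> {}" using cp(3) Une by blast
        moreover have "finite W" using cp(1) finU finite_subset by blast
        ultimately obtain res where "extract_result d W (R / (2 * real k)) k res" using extract_exists by blast
        then show ?thesis using cr by (intro exI[of _ "(W, res)"]) simp
      next
        case False then show ?thesis by simp
      qed
    qed
    then obtain h where h: "\<forall>R. R \<in> radii \<longrightarrow> cluster_result d U R (fst (h R)) \<and>
        extract_result d (fst (h R)) (R / (2 * real k)) k (snd (h R))"
      using choice[of "\<lambda>R p. R \<in> radii \<longrightarrow> cluster_result d U R (fst p) \<and> extract_result d (fst p) (R / (2 * real k)) k (snd p)"]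
      by blast
    have "bac_run U d k (\<lambda>R. fst (h R)) (\<lambda>R. snd (h R))" unfolding bac_run_def using h radii_def by blast
    then show ?thesis by blast
  qed
  define DT where "DT = {diver d T | T. T \<subseteq> U \<and> card T = k}"
  have finDT: "finite DT"
  proof -
    have "DT \<subseteq> diver d ` Pow U" unfolding DT_def by auto
    then show ?thesis using finU finite_subset by blast
  qed
  obtain T0 where "T0 \<subseteq> U" "card T0 = k" using obtain_subset_with_card_n[of k U] assms(2,4) by metis
  then have "DT \<noteq> {}" unfolding DT_def by blast
  then have "Max DT \<in> DT" using finDT by (rule Max_in[rotated])
  have memDT: "\<exists>T. x = diver d T \<and> T \<subseteq> U \<and> card T = k" if "x \<in> DT" for x
    using that unfolding DT_def by blast
  have MaxRs: "Max DT = Rs" unfolding Rs_def opt_div_def DT_def ..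
  obtain Opt where Opt: "Opt \<subseteq> U" "card Opt = k" "diver d Opt = Rs"
    using memDT[OF \<open>Max DT \<in> DT\<close>] MaxRs by metis
  have finO: "finite Opt" using Opt(1) finU finite_subset by blast
  define DP where "DP = {d u v | u v. u \<in> Opt \<and> v \<in> Opt \<and> u \<noteq> v}"
  have finDP: "finite DP"
  proof -
    have "DP \<subseteq> (\<lambda>(u, v). d u v) ` (Opt \<times> Opt)" unfolding DP_def by auto
    then show ?thesis using finO finite_subset by blast
  qed
  obtain u0 v0 where uv0: "u0 \<in> Opt" "v0 \<in> Opt" "u0 \<noteq> v0"
  proof -
    have "\<not> (\<forall>x\<in>Opt. \<forall>y\<in>Opt. x = y)" using card_le_Suc0_iff_eq[OF finO] Opt(2) assms(3) by auto
    then show ?thesis using that by blast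
  qed
  then have DPne: "DP \<noteq> {}" unfolding DP_def by blast
  have RsDP: "Rs = Min DP" using Opt(3) unfolding diver_def DP_def by simp
  have Osep: "\<forall>u\<in>Opt. \<forall>v\<in>Opt. u \<noteq> v \<longrightarrow> Rs \<le> d u v"
    unfolding RsDP using finDP unfolding DP_def by (auto intro!: Min_le)
  have "Rs \<in> DP" unfolding RsDP using finDP DPne by (rule Min_in)
  then obtain u1 v1 where uv1: "u1 \<in> Opt" "v1 \<in> Opt" "u1 \<noteq> v1" "d u1 v1 = Rs" unfolding DP_def by blast
  have Rsrad: "Rs \<in> radii" unfolding radii_def bac_radii_def using uv1 Opt(1) Rs by blast
  define RS3 where "RS3 = {r \<in> radii. Rs / 3 \<le> r}"
  have finRS3: "finite RS3" using finR unfolding RS3_def by simp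
  have "Rs \<in> RS3" using Rsrad Rs unfolding RS3_def by simp
  then have RS3ne: "RS3 \<noteq> {}" by blast
  define R0 where "R0 = Min RS3"
  have R0in: "R0 \<in> RS3" unfolding R0_def using finRS3 RS3ne by (rule Min_in)
  then have R0rad: "R0 \<in> radii" and R0ge: "Rs / 3 \<le> R0" unfolding RS3_def by auto
  have R0min: "\<And>r. r \<in> radii \<Longrightarrow> Rs / 3 \<le> r \<Longrightarrow> R0 \<le> r"
    unfolding R0_def using finRS3 unfolding RS3_def by (auto intro!: Min_le)
  have R0pos: "R0 > 0" using radpos[OF R0rad] .
  have key2: "\<forall>x\<in>U. \<forall>y\<in>U. x \<noteq> y \<longrightarrow> d x y \<ge> Rs / 3 \<longrightarrow> d x y \<ge> R0"
  proof (intro ballI impI)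
    fix x y assume xy: "x \<in> U" "y \<in> U" "x \<noteq> y" "d x y \<ge> Rs / 3"
    then have "d x y > 0" using Rs by linarith
    then have "d x y \<in> radii" unfolding radii_def bac_radii_def using xy by blast
    then show "d x y \<ge> R0" using R0min xy by blast
  qed
  have key1: "\<forall>x\<in>U. \<forall>y\<in>U. x \<noteq> y \<longrightarrow> d x y < R0 \<longrightarrow> d x y < Rs / 3"
    using key2 by force
  have part2: "(\<exists>S. bac_returns U d out S) \<and>
       (\<forall>S. bac_returns U d out S \<longrightarrow> S \<subseteq> U \<and> card S = k \<and> diver d S \<ge> Rs / (6 * real k))"
    if run: "bac_run U d k Uc out" for Uc out
  proof -
    have runR: "\<And>R. R \<in> radii \<Longrightarrow> cluster_result d U R (Uc R) \<and> extract_result d (Uc R) (R / (2 * real k)) k (out R)"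
      using run unfolding bac_run_def radii_def by blast
    have outgood: "S \<subseteq> U \<and> card S = k \<and> R / (2 * real k) \<le> diver d S"
      if R: "R \<in> radii" and S: "out R = Some S" for R S
    proof -
      note cp = cluster_result_props[OF conjunct1[OF runR[OF R]]]
      have sig: "R / (2 * real k) > 0" using radpos[OF R] kpos by simp
      have g: "S \<subseteq> Uc R \<and> card S = k \<and> (\<forall>x\<in>S. \<forall>y\<in>S. x \<noteq> y \<longrightarrow> R / (2 * real k) \<le> d x y)"
      proof -
        have "extract_result d (Uc R) (R / (2 * real k)) k (out R)" using runR[OF R] by blast
        then have ex: "extract_result d (Uc R) (R / (2 * real k)) k (Some S)" using S by simp
        show ?thesis by (rule extract_good[OF pm cp(1) sig k1 sepR[OF cp(2)] ex])
      qed
      have SU: "S \<subseteq> U" using g cp(1) by blast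
      have "R / (2 * real k) \<le> diver d S"
        using diver_ge[of S "R / (2 * real k)" d] g SU finU finite_subset assms(3) by metis
      then show ?thesis using SU g by blast
    qed
    have "out R0 \<noteq> None"
    proof -
      note cp = cluster_result_props[OF conjunct1[OF runR[OF R0rad]]]
      have sig: "R0 / (2 * real k) > 0" using R0pos kpos by simp
      have H: "\<not> has_dicycle d (R0 / (2 * real k)) (Uc R0) \<Longrightarrow>
         (\<exists>A. cantichain d (R0 / (2 * real k)) (Uc R0) A \<and> k \<le> card A) \<or>
         (\<exists>P. shortest_cpath d (R0 / (2 * real k)) (Uc R0) P \<and> length P = 2 * k)"
        using dag_H[OF pm cp(1) assms(3) R0pos cp(3) Opt(1,2) Rs Osep key1 key2 refl] by blast
      show ?thesis using extract_some[OF pm cp(1) sig k1 sepR[OF cp(2)] H] runR[OF R0rad] by blast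
    qed
    then obtain S0 where S0: "out R0 = Some S0" by blast
    have "R0 / (2 * real k) \<le> diver d S0" using outgood[OF R0rad S0] by blast
    moreover have "Rs / (6 * real k) \<le> R0 / (2 * real k)"
    proof -
      have "Rs / (6 * real k) = (Rs / 3) / (2 * real k)" by simp
      also have "\<dots> \<le> R0 / (2 * real k)" using R0ge kpos by (intro divide_right_mono) auto
      finally show ?thesis .
    qed
    ultimately have S0good: "Rs / (6 * real k) \<le> diver d S0" by linarith
    define RR where "RR = {R \<in> radii. out R \<noteq> None}"
    have finRR: "finite RR" using finR unfolding RR_def by simp
    have R0RR: "R0 \<in> RR" using R0rad S0 unfolding RR_def by simp
    define mv where "mv = Max ((\<lambda>R. diver d (the (out R))) ` RR)"
    have "mv \<in> (\<lambda>R. diver d (the (out R))) ` RR" unfolding mv_def using finRR R0RR by (intro Max_in) auto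
    then obtain Rm where Rm: "Rm \<in> RR" "diver d (the (out Rm)) = mv" by auto
    have mvmax: "\<And>R. R \<in> RR \<Longrightarrow> diver d (the (out R)) \<le> mv" unfolding mv_def using finRR by auto
    obtain Sm where Sm: "out Rm = Some Sm" using Rm unfolding RR_def by auto
    have ret: "bac_returns U d out Sm"
      unfolding bac_returns_def
    proof (intro bexI[of _ Rm] conjI ballI allI impI)
      show "Rm \<in> bac_radii U d" using Rm unfolding RR_def radii_def by simp
      show "out Rm = Some Sm" by fact
      fix R' S' assume R': "R' \<in> bac_radii U d" "out R' = Some S'"
      then have "R' \<in> RR" unfolding RR_def radii_def by simp
      then show "diver d S' \<le> diver d Sm" using mvmax[of R'] R' Rm Sm by simp
    qed
    have allgood: "S \<subseteq> U \<and> card S = k \<and> diver d S \<ge> Rs / (6 * real k)" if retS: "bac_returns U d out S" for S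
    proof -
      obtain R where R: "R \<in> radii" "out R = Some S"
        and mx: "\<forall>R' \<in> radii. \<forall>S'. out R' = Some S' \<longrightarrow> diver d S' \<le> diver d S"
        using retS unfolding bac_returns_def radii_def by blast
      have "diver d S0 \<le> diver d S" using mx R0rad S0 by blast
      then show ?thesis using outgood[OF R] S0good by simp
    qed
    show ?thesis using ret allgood by blast
  qed
  show ?thesis using ex1 part2 unfolding Rs_def by blast
qed


end
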